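(* Let $\Sigma$ be a closed oriented surface and let $\mathcal T$ be a coherent double circuit configuration on $\Sigma$ in $\mathbb P^d$ ($d\ge 2$). Let $\mathcal T'$ be obtained from $\mathcal T$ by one of the moves (M1) (degree-two vertex removal or addition) or (M2) (urban renewal) described below, where the data are generic, so that all labels of $\mathcal T'$ are well defined (every intersection and span used below is a point, respectively a hyperplane) and $\mathcal T'$ is again a double circuit configuration in which all pairings entering the multi-ratios of its faces are nonzero. Then $\mathcal T'$ is coherent.
   Context: A tiling of a closed oriented surface $\Sigma$ is a bipartite graph $\Gamma$ (vertices colored white and black, each edge joining vertices of different colors) embedded in $\Sigma$ so that every face (connected component of $\Sigma\setminus\Gamma$) is an open disk, together with an assignment of a point of $\mathbb P^d$ to every white vertex and a hyperplane of $\mathbb P^d$ to every black vertex. Each face is a $2n$-gon whose boundary vertices alternate in color. Multi-ratio: for points $A_1,\dots,A_n$ and hyperplanes $\ell_1,\dots,\ell_n$ of $\mathbb P^d$, choose representing vectors $\mathbf A_i\in\mathbb C^{d+1}$ and covectors $\boldsymbol\ell_i$, and set $[A_1,\ell_1,\dots,A_n,\ell_n]=\frac{\boldsymbol\ell_1(\mathbf A_1)\cdots\boldsymbol\ell_n(\mathbf A_n)}{\boldsymbol\ell_1(\mathbf A_2)\cdots\boldsymbol\ell_n(\mathbf A_1)}$ (indices mod $n$; this is independent of the lifts). A face is coherent if the multi-ratio of the labels of its boundary vertices, read in clockwise order (with respect to the orientation of $\Sigma$), equals $1$; a tiling is coherent if every face is coherent. A circuit in a projective space is a linearly dependent set of points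 no proper subset of which is linearly dependent (e.g. two equal points; three pairwise distinct collinear points). Hyperplanes are regarded as points of the dual projective space. A tiling is a double circuit configuration if for every vertex, the labels of its neighbors form a circuit. Moves. (M1) Degree-two vertex removal: if a white vertex labeled $A$ has degree 2 with distinct black neighbors $u,u'$ (which, by the circuit condition, carry the same hyperplane $\ell$), delete this white vertex and its two edges and merge $u,u'$ into one black vertex labeled $\ell$ adjacent to all former neighbors of $u$ and $u'$. The same with colors (points/hyperplanes) interchanged. Degree-two vertex addition is the inverse operation. (M2) Urban renewal: suppose there is a quadrilateral face with boundary vertices, in cyclic order, $A$ (white), $c$ (black), $B$ (white), $d$ (black), where $A$'s other black neighbors are labeled $a_1,\dots,a_m$, $c$'s other white neighbors $C_1,\dots,C_k$, $B$'s other black neighbors $b_1,\dots,b_n$, $d$'s other white neighbors $D_1,\dots,D_l$. Delete the four edges $Ac,cB,Bd,dA$; insert new vertices $g$ (black), $E$ (white), $h$ (black), $F$ (white) forming a new quadrilateral face with cycle $g,E,h,F$, and add edges $A g$, $c E$, $B h$, $d F$ (so the square face is replaced by an inner square and four surrounding quadrilateral faces). The new labels are $E=\langle A,B\rangle\cap\langle C_1,\dots,C_k\rangle$, $F=\langle A,B\rangle\cap\langle D_1,\dots,D_l\rangle$, $g=\langle c\cap d,\ a_1\cap\dots\cap a_m\rangle$, $h=\langle c\cap d,\ b_1\cap\dots\cap b_n\rangle$, where $\langle\cdot\rangle$ denotes span; all other labels are unchanged. *)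

theory Defs
  imports "HOL-Analysis.Analysis"
begin

text \<open>Points and hyperplanes of P^d are represented by nonzero representing vectors and
covectors in complex^(d+1), i.e. in complex ^ 'n with CARD('n) = d + 1.
All notions below are invariant under rescaling of the lifts.\<close>

definition pairing :: "complex ^ 'n \<Rightarrow> complex ^ 'n \<Rightarrow> complex" where
  "pairing l x = (\<Sum>i\<in>UNIV. l $ i * x $ i)"

definition hyp :: "complex ^ 'n \<Rightarrow> (complex ^ 'n) set" where
  "hyp l = {x. pairing l x = 0}"

definition fam_dependent :: "'i set \<Rightarrow> ('i \<Rightarrow> complex ^ 'n) \<Rightarrow> bool" where
  "fam_dependent N f \<longleftrightarrow> (\<exists>c. (\<exists>i\<in>N. c i \<noteq> 0) \<and> (\<Sum>i\<in>N. c i *s f i) = 0)"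

definition is_circuit :: "'i set \<Rightarrow> ('i \<Rightarrow> complex ^ 'n) \<Rightarrow> bool" where
  "is_circuit N f \<longleftrightarrow> finite N \<and> fam_dependent N f \<and> (\<forall>M. M \<subset> N \<longrightarrow> \<not> fam_dependent M f)"

text \<open>A bipartite graph embedded in a closed oriented surface with all faces open disks is
encoded combinatorially by its finite set of edges, the white and black endpoint maps and the
cyclic (rotation) orders of edges around each white and each black vertex (a hypermap).
Faces are the orbits of rotW o rotB acting on edges: an orbit e_1,...,e_n
describes the 2n-gon with boundary wv e_1, bv e_1, wv e_2, bv e_2, ..., wv e_n, bv e_n.\<close>

record ('e, 'v, 'x) tiling =
  edges :: "'e set"
  wv :: "'e \<Rightarrow> 'v"
  bv :: "'e \<Rightarrow> 'v"
  rotW :: "'e \<Rightarrow> 'e"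
  rotB :: "'e \<Rightarrow> 'e"
  lab :: "'v \<Rightarrow> 'x"

definition whites :: "('e,'v,'x) tiling \<Rightarrow> 'v set" where
  "whites T = wv T ` edges T"

definition blacks :: "('e,'v,'x) tiling \<Rightarrow> 'v set" where
  "blacks T = bv T ` edges T"

definition verts :: "('e,'v,'x) tiling \<Rightarrow> 'v set" where
  "verts T = whites T \<union> blacks T"

definition nbrsW :: "('e,'v,'x) tiling \<Rightarrow> 'v \<Rightarrow> 'v set" where
  "nbrsW T v = {bv T e | e. e \<in> edges T \<and> wv T e = v}"

definition nbrsB :: "('e,'v,'x) tiling \<Rightarrow> 'v \<Rightarrow> 'v set" where
  "nbrsB T v = {wv T e | e. e \<in> edges T \<and> bv T e = v}"

definition is_tiling :: "('e,'v,complex ^ 'n) tiling \<Rightarrow> bool" where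
  "is_tiling T \<longleftrightarrow>
     finite (edges T) \<and> edges T \<noteq> {} \<and>
     whites T \<inter> blacks T = {} \<and>
     bij_betw (rotW T) (edges T) (edges T) \<and>
     bij_betw (rotB T) (edges T) (edges T) \<and>
     (\<forall>e\<in>edges T. wv T (rotW T e) = wv T e) \<and>
     (\<forall>e\<in>edges T. bv T (rotB T e) = bv T e) \<and>
     (\<forall>e\<in>edges T. \<forall>f\<in>edges T. wv T e = wv T f \<longrightarrow> (\<exists>k. (rotW T ^^ k) e = f)) \<and>
     (\<forall>e\<in>edges T. \<forall>f\<in>edges T. bv T e = bv T f \<longrightarrow> (\<exists>k. (rotB T ^^ k) e = f)) \<and>
     (\<forall>e\<in>edges T. \<forall>f\<in>edges T.
        (e, f) \<in> ({(x, rotW T x) | x. x \<in> edges T} \<union> {(x, rotB T x) | x. x \<in> edges T})\<^sup>*) \<and>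
     (\<forall>v\<in>verts T. lab T v \<noteq> 0)"

definition facerot :: "('e,'v,'x) tiling \<Rightarrow> 'e \<Rightarrow> 'e" where
  "facerot T = rotW T \<circ> rotB T"

definition face_len :: "('e,'v,'x) tiling \<Rightarrow> 'e \<Rightarrow> nat" where
  "face_len T e = (LEAST k. 0 < k \<and> (facerot T ^^ k) e = e)"

text \<open>Multi-ratio [A_1, l_1, ..., A_n, l_n] of the face through edge e, with
A_i = wv e_i, l_i = bv e_i, e_i = facerot^(i-1) e, and A_(n+1) = A_1.\<close>
definition face_multiratio :: "('e,'v,complex ^ 'n) tiling \<Rightarrow> 'e \<Rightarrow> complex" where
  "face_multiratio T e =
     (\<Prod>i<face_len T e. pairing (lab T (bv T ((facerot T ^^ i) e))) (lab T (wv T ((facerot T ^^ i) e))))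
   / (\<Prod>i<face_len T e. pairing (lab T (bv T ((facerot T ^^ i) e))) (lab T (wv T ((facerot T ^^ Suc i) e))))"

definition coherent :: "('e,'v,complex ^ 'n) tiling \<Rightarrow> bool" where
  "coherent T \<longleftrightarrow> (\<forall>e\<in>edges T. face_multiratio T e = 1)"

definition nonzero_pairings :: "('e,'v,complex ^ 'n) tiling \<Rightarrow> bool" where
  "nonzero_pairings T \<longleftrightarrow> (\<forall>e\<in>edges T.
      pairing (lab T (bv T e)) (lab T (wv T e)) \<noteq> 0 \<and>
      pairing (lab T (bv T e)) (lab T (wv T (facerot T e))) \<noteq> 0)"

definition double_circuit :: "('e,'v,complex ^ 'n) tiling \<Rightarrow> bool" where
  "double_circuit T \<longleftrightarrow> is_tiling T \<and>
     (\<forall>v\<in>whites T. is_circuit (nbrsW T v) (lab T)) \<and>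
     (\<forall>v\<in>blacks T. is_circuit (nbrsB T v) (lab T))"

definition first_return :: "('e \<Rightarrow> 'e) \<Rightarrow> 'e set \<Rightarrow> 'e \<Rightarrow> 'e" where
  "first_return p S e = (p ^^ (LEAST k. 0 < k \<and> (p ^^ k) e \<in> S)) e"

text \<open>(M1) Removal of a white vertex of degree two (edges e1, e2) with distinct black
neighbours u = bv e1, u' = bv e2; u and u' are merged into one vertex (named u).
The rotation at the merged vertex is obtained by concatenating the two rotations.\<close>
definition remove_white :: "('e,'v,complex ^ 'n) tiling \<Rightarrow> ('e,'v,complex ^ 'n) tiling \<Rightarrow> bool" where
  "remove_white T T' \<longleftrightarrow> (\<exists>e1 e2.
     e1 \<in> edges T \<and> e2 \<in> edges T \<and> e1 \<noteq> e2 \<and>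
     {f\<in>edges T. wv T f = wv T e1} = {e1, e2} \<and>
     bv T e1 \<noteq> bv T e2 \<and>
     edges T' = edges T - {e1, e2} \<and>
     (\<forall>f\<in>edges T'. wv T' f = wv T f \<and>
        bv T' f = (if bv T f = bv T e2 then bv T e1 else bv T f) \<and>
        rotW T' f = rotW T f \<and>
        rotB T' f = first_return (rotB T \<circ> Transposition.transpose e1 e2) (edges T') f) \<and>
     (\<forall>v\<in>verts T'. lab T' v = lab T v))"

definition remove_black :: "('e,'v,complex ^ 'n) tiling \<Rightarrow> ('e,'v,complex ^ 'n) tiling \<Rightarrow> bool" where
  "remove_black T T' \<longleftrightarrow> (\<exists>e1 e2.
     e1 \<in> edges T \<and> e2 \<in> edges T \<and> e1 \<noteq> e2 \<and>
     {f\<in>edges T. bv T f = bv T e1} = {e1, e2} \<and>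
     wv T e1 \<noteq> wv T e2 \<and>
     edges T' = edges T - {e1, e2} \<and>
     (\<forall>f\<in>edges T'. bv T' f = bv T f \<and>
        wv T' f = (if wv T f = wv T e2 then wv T e1 else wv T f) \<and>
        rotB T' f = rotB T f \<and>
        rotW T' f = first_return (rotW T \<circ> Transposition.transpose e1 e2) (edges T') f) \<and>
     (\<forall>v\<in>verts T'. lab T' v = lab T v))"

definition move_M1 :: "('e,'v,complex ^ 'n) tiling \<Rightarrow> ('e,'v,complex ^ 'n) tiling \<Rightarrow> bool" where
  "move_M1 T T' \<longleftrightarrow> remove_white T T' \<or> remove_white T' T \<or> remove_black T T' \<or> remove_black T' T"

text \<open>Replace two consecutive elements x, y (with p x = y) of a cycle of p by a single new element z.\<close>
definition merge2 :: "('e \<Rightarrow> 'e) \<Rightarrow> 'e \<Rightarrow> 'e \<Rightarrow> 'e \<Rightarrow> 'e \<Rightarrow> 'e" where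
  "merge2 p x y z e =
     (if e = z then (if p y = x then z else p y) else if p e = x then z else p e)"

text \<open>(M2) Urban renewal at the quadrilateral face through edge ea:
ea = A-c, eb = rotB ea = c-B, ec = rotW eb = B-d, ed = rotB ec = d-A, rotW ed = ea.
The four edges are replaced by spokes kA = A-g, kc = E-c, kB = B-h, kd = F-d and the
square q1 = E-g, q2 = E-h, q3 = F-h, q4 = F-g, with rotations consistent with the embedding.
The new labels are the (generic, i.e. well-defined) intersections/spans from the paper;
a linear subspace of complex^(d+1) stands for the corresponding projective subspace.\<close>
definition urban_renewal :: "('e,'v,complex ^ 'n) tiling \<Rightarrow> ('e,'v,complex ^ 'n) tiling \<Rightarrow> bool" where
  "urban_renewal T T' \<longleftrightarrow> (\<exists>ea kA kc kB kd q1 q2 q3 q4 g E h F.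
     let eb = rotB T ea; ec = rotW T eb; ed = rotB T ec;
         A = wv T ea; c = bv T ea; B = wv T ec; d = bv T ec;
         old = {ea, eb, ec, ed}; new = {kA, kc, kB, kd, q1, q2, q3, q4};
         wv' = (wv T)(kA := A, kc := E, kB := B, kd := F, q1 := E, q2 := E, q3 := F, q4 := F);
         bv' = (bv T)(kA := g, kc := c, kB := h, kd := d, q1 := g, q2 := h, q3 := h, q4 := g);
         rW = (merge2 (merge2 (rotW T) ed ea kA) eb ec kB)
                (kc := q1, q1 := q2, q2 := kc, q4 := kd, kd := q3, q3 := q4);
         rB = (merge2 (merge2 (rotB T) ea eb kc) ec ed kd)
                (kA := q4, q4 := q1, q1 := kA, q2 := q3, q3 := kB, kB := q2)
     in ea \<in> edges T \<and> rotW T ed = ea \<and> A \<noteq> B \<and> c \<noteq> d \<and>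
        card new = 8 \<and> new \<inter> edges T = {} \<and>
        distinct [g, E, h, F] \<and> {g, E, h, F} \<inter> verts T = {} \<and>
        edges T' = (edges T - old) \<union> new \<and>
        (\<forall>f\<in>edges T'. wv T' f = wv' f \<and> bv T' f = bv' f \<and>
                       rotW T' f = rW f \<and> rotB T' f = rB f) \<and>
        (\<forall>v\<in>verts T. lab T' v = lab T v) \<and>
        lab T' E \<noteq> 0 \<and>
        vec.span {lab T' E} = vec.span {lab T A, lab T B} \<inter> vec.span (lab T ` (nbrsB T c - {A, B})) \<and>
        lab T' F \<noteq> 0 \<and>
        vec.span {lab T' F} = vec.span {lab T A, lab T B} \<inter> vec.span (lab T ` (nbrsB T d - {A, B})) \<and>
        lab T' g \<noteq> 0 \<and>
        hyp (lab T' g) = vec.span ((hyp (lab T c) \<inter> hyp (lab T d)) \<union>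
                                    \<Inter> (hyp ` lab T ` (nbrsW T A - {c, d}))) \<and>
        lab T' h \<noteq> 0 \<and>
        hyp (lab T' h) = vec.span ((hyp (lab T c) \<inter> hyp (lab T d)) \<union>
                                    \<Inter> (hyp ` lab T ` (nbrsW T B - {c, d}))))"

end

theory Submission
  imports Defs
begin


lemma pairing_add2: "pairing l (x + y) = pairing l x + pairing l y"
  by (simp add: pairing_def distrib_left sum.distrib)
lemma pairing_diff2: "pairing l (x - y) = pairing l x - pairing l y"
  by (simp add: pairing_def right_diff_distrib sum_subtractf)
lemma pairing_scale2: "pairing l (a *s x) = a * pairing l x"
  by (simp add: pairing_def sum_distrib_left mult.left_commute)
lemma pairing_scale1: "pairing (a *s l) x = a * pairing l x"
  by (simp add: pairing_def sum_distrib_left mult.assoc)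

definition plen :: "('a \<Rightarrow> 'a) \<Rightarrow> 'a \<Rightarrow> nat" where
  "plen P e = (LEAST n. 0 < n \<and> (P ^^ n) e = e)"

lemma plen_props:
  assumes "\<exists>n>0. (P ^^ n) e = e"
  shows "0 < plen P e" "(P ^^ plen P e) e = e"
    "\<And>j. 0 < j \<Longrightarrow> j < plen P e \<Longrightarrow> (P ^^ j) e \<noteq> e"
proof -
  have *: "0 < plen P e \<and> (P ^^ plen P e) e = e"
    unfolding plen_def using assms by (metis (mono_tags, lifting) LeastI_ex)
  then show "0 < plen P e" "(P ^^ plen P e) e = e" by auto
  fix j assume "0 < j" "j < plen P e"
  then show "(P ^^ j) e \<noteq> e" unfolding plen_def using not_less_Least by blast
qed

lemma plen_le: "0 < j \<Longrightarrow> (P ^^ j) e = e \<Longrightarrow> plen P e \<le> j"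
  unfolding plen_def by (simp add: Least_le)

lemma plen_eqI: "0 < L \<Longrightarrow> (P ^^ L) e = e \<Longrightarrow> (\<And>j. 0 < j \<Longrightarrow> j < L \<Longrightarrow> (P ^^ j) e \<noteq> e)
   \<Longrightarrow> plen P e = L"
  unfolding plen_def by (rule Least_equality) (auto simp: not_less[symmetric])

lemma prod_lessThan_add:
  fixes a b :: nat
  shows "(\<Prod>j<a + b. g j) = (\<Prod>j<a. g j) * (\<Prod>j<b. g (a + j))"
  by (induction b) (simp_all add: mult.assoc)

lemma period_exists:
  assumes "finite S" "bij_betw f S S" "x \<in> S"
  shows "\<exists>n>0. (f ^^ n) x = x"
proof -
  have fS: "\<And>n y. y \<in> S \<Longrightarrow> (f ^^ n) y \<in> S"
    using bij_betw_funpow[OF assms(2)] by (meson bij_betwE)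
  have "\<not> inj_on (\<lambda>i. (f ^^ i) x) {..card S}"
  proof
    assume "inj_on (\<lambda>i. (f ^^ i) x) {..card S}"
    moreover have "(\<lambda>i. (f ^^ i) x) ` {..card S} \<subseteq> S" using fS assms(3) by auto
    ultimately have "card {..card S} \<le> card S" using card_inj_on_le assms(1) by blast
    then show False by simp
  qed
  then obtain i j where ij: "i < j" "(f ^^ i) x = (f ^^ j) x"
    unfolding inj_on_def by (metis linorder_neqE_nat)
  have "(f ^^ i) ((f ^^ (j - i)) x) = (f ^^ i) x"
    using ij by (metis add_diff_inverse_nat funpow_add less_imp_le_nat not_le o_apply)
  moreover have "inj_on (f ^^ i) S" using bij_betw_funpow[OF assms(2)] bij_betw_def by blast
  ultimately have "(f ^^ (j - i)) x = x" using fS assms(3) by (meson inj_onD)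
  then show ?thesis using ij by (intro exI[of _ "j - i"]) auto
qed

lemma prod_period_shift:
  assumes "(P ^^ L) e = e" "0 < L"
  shows "(\<Prod>i<L. W ((P ^^ i) (P e))) = (\<Prod>i<L. W ((P ^^ i) e))"
proof -
  obtain m where m: "L = Suc m" using assms(2) gr0_implies_Suc by blast
  have "(\<Prod>i<L. W ((P ^^ i) (P e))) = (\<Prod>i<Suc m. W ((P ^^ Suc i) e))"
    by (simp add: m funpow_Suc_right del: funpow.simps)
  also have "\<dots> = (\<Prod>i<m. W ((P ^^ Suc i) e)) * W ((P ^^ L) e)"
    by (simp add: m del: funpow.simps)
  also have "\<dots> = W e * (\<Prod>i<m. W ((P ^^ Suc i) e))" using assms(1) by (simp add: mult.commute del: funpow.simps)
  also have "\<dots> = (\<Prod>i<Suc m. W ((P ^^ i) e))"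
    by (subst prod.lessThan_Suc_shift) simp
  finally show ?thesis by (simp add: m)
qed

lemma funpow_comm: "(f ^^ a) ((f ^^ b) x) = (f ^^ b) ((f ^^ a) x)"
proof -
  have "(f ^^ a) ((f ^^ b) x) = (f ^^ (a + b)) x" by (simp add: funpow_add)
  also have "\<dots> = (f ^^ (b + a)) x" by (simp add: add.commute)
  also have "\<dots> = (f ^^ b) ((f ^^ a) x)" by (simp add: funpow_add)
  finally show ?thesis .
qed

lemma funpow_Suc_apply2: "(f ^^ Suc n) x = (f ^^ n) (f x)"
  by (simp only: funpow_Suc_right o_apply)

lemma plen_shift:
  assumes "\<exists>n>0. (P ^^ n) e = e"
  shows "plen P (P e) = plen P e" "\<exists>n>0. (P ^^ n) (P e) = P e"
proof -
  define L where "L = plen P e"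
  note Lp = plen_props[OF assms, folded L_def]
  have A0: "(P ^^ L) (P e) = P ((P ^^ L) e)" by (rule funpow_swap1[symmetric])
  have A: "(P ^^ L) (P e) = P e" by (simp only: A0 Lp(2))
  have B0: "(P ^^ (L - 1)) (P e) = (P ^^ Suc (L - 1)) e"
    by (rule funpow_Suc_apply2[symmetric])
  have B: "(P ^^ (L - 1)) (P e) = e"
    by (simp only: B0 Suc_diff_1[OF Lp(1)] Lp(2))
  show "plen P (P e) = plen P e"
    unfolding L_def[symmetric]
  proof (rule plen_eqI[OF Lp(1) A])
    fix j assume j: "0 < j" "j < L"
    show "(P ^^ j) (P e) \<noteq> P e"
    proof
      assume h: "(P ^^ j) (P e) = P e"
      have "(P ^^ j) e = (P ^^ j) ((P ^^ (L - 1)) (P e))" by (simp only: B)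
      also have "\<dots> = (P ^^ (L - 1)) ((P ^^ j) (P e))" by (rule funpow_comm)
      also have "\<dots> = e" by (simp only: h B)
      finally show False using Lp(3)[OF j] by simp
    qed
  qed
  show "\<exists>n>0. (P ^^ n) (P e) = P e" using A Lp(1) by blast
qed

definition oprod :: "('a \<Rightarrow> 'a) \<Rightarrow> ('a \<Rightarrow> complex) \<Rightarrow> 'a \<Rightarrow> complex" where
  "oprod P W e = (\<Prod>i<plen P e. W ((P ^^ i) e))"

lemma oprod_shift1:
  assumes "\<exists>n>0. (P ^^ n) e = e"
  shows "oprod P W (P e) = oprod P W e"
proof -
  have "oprod P W (P e) = (\<Prod>i<plen P e. W ((P^^i) (P e)))"
    unfolding oprod_def plen_shift(1)[OF assms] ..
  also have "\<dots> = (\<Prod>i<plen P e. W ((P^^i) e))"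
    by (rule prod_period_shift[OF plen_props(2)[OF assms] plen_props(1)[OF assms]])
  finally show ?thesis unfolding oprod_def .
qed

lemma oprod_shift:
  assumes "\<exists>n>0. (P ^^ n) e = e"
  shows "oprod P W ((P ^^ k) e) = oprod P W e \<and> (\<exists>n>0. (P ^^ n) ((P ^^ k) e) = (P ^^ k) e)"
proof (induction k)
  case 0 then show ?case using assms by simp
next
  case (Suc k)
  then have IH1: "oprod P W ((P ^^ k) e) = oprod P W e"
    and IH2: "\<exists>n>0. (P ^^ n) ((P ^^ k) e) = (P ^^ k) e" by auto
  have e: "(P ^^ Suc k) e = P ((P ^^ k) e)" by simp
  show ?case unfolding e
    using oprod_shift1[OF IH2, of W] plen_shift(2)[OF IH2] IH1 by simp
qed

lemma block_prod:
  assumes eS: "e \<in> S"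
  and blk: "\<And>f. f \<in> S \<Longrightarrow> q f \<in> S \<and> (\<exists>k>0. q f = (P ^^ k) f \<and>
              (\<forall>j. 0 < j \<longrightarrow> j < k \<longrightarrow> (P ^^ j) f \<notin> S) \<and>
              \<omega> f = (\<Prod>j<k. W ((P ^^ j) f)))"
  and per: "\<exists>n>0. (q ^^ n) e = e"
  shows "(\<exists>n>0. (P ^^ n) e = e) \<and> oprod q \<omega> e = oprod P W e"
proof -
  have "\<forall>f\<in>S. \<exists>k. 0 < k \<and> q f = (P ^^ k) f \<and>
              (\<forall>j. 0 < j \<longrightarrow> j < k \<longrightarrow> (P ^^ j) f \<notin> S) \<and>
              \<omega> f = (\<Prod>j<k. W ((P ^^ j) f))" using blk by blast
  then obtain K where K: "\<forall>f\<in>S. 0 < K f \<and> q f = (P ^^ K f) f \<and>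
              (\<forall>j. 0 < j \<longrightarrow> j < K f \<longrightarrow> (P ^^ j) f \<notin> S) \<and>
              \<omega> f = (\<Prod>j<K f. W ((P ^^ j) f))" by (rule bchoice[elim_format]) blast
  have K1: "\<And>f. f \<in> S \<Longrightarrow> 0 < K f" using K by blast
  have K2: "\<And>f. f \<in> S \<Longrightarrow> q f = (P ^^ K f) f" using K by blast
  have K3: "\<And>f j. f \<in> S \<Longrightarrow> 0 < j \<Longrightarrow> j < K f \<Longrightarrow> (P ^^ j) f \<notin> S" using K by blast
  have K4: "\<And>f. f \<in> S \<Longrightarrow> \<omega> f = (\<Prod>j<K f. W ((P ^^ j) f))" using K by blast
  have qS: "(q ^^ i) e \<in> S" for i
    by (induction i) (use eS blk in auto)
  define R where "R n = (\<Sum>i<n. K ((q ^^ i) e))" for n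
  have R0: "R 0 = 0" by (simp add: R_def)
  have RS: "R (Suc n) = R n + K ((q ^^ n) e)" for n by (simp add: R_def)
  have Kpos: "0 < K ((q ^^ n) e)" for n using K1 qS by blast
  have qR: "(q ^^ n) e = (P ^^ R n) e" for n
  proof (induction n)
    case 0 then show ?case by (simp add: R0)
  next
    case (Suc n)
    have "(q ^^ Suc n) e = q ((q ^^ n) e)" by simp
    also have "\<dots> = (P ^^ K ((q ^^ n) e)) ((q ^^ n) e)" using K2 qS by blast
    also have "\<dots> = (P ^^ K ((q ^^ n) e)) ((P ^^ R n) e)" using Suc by simp
    also have "\<dots> = (P ^^ (K ((q ^^ n) e) + R n)) e" by (simp only: funpow_add o_apply)
    also have "\<dots> = (P ^^ R (Suc n)) e" by (simp only: RS add.commute)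
    finally show ?case .
  qed
  have prodR: "(\<Prod>i<n. \<omega> ((q ^^ i) e)) = (\<Prod>j<R n. W ((P ^^ j) e))" for n
  proof (induction n)
    case 0 then show ?case by (simp add: R0)
  next
    case (Suc n)
    have "(\<Prod>i<Suc n. \<omega> ((q ^^ i) e)) = (\<Prod>j<R n. W ((P ^^ j) e)) * \<omega> ((q ^^ n) e)"
      using Suc by simp
    also have "\<omega> ((q ^^ n) e) = (\<Prod>j<K ((q ^^ n) e). W ((P ^^ j) ((q ^^ n) e)))"
      using K4 qS by blast
    also have "\<dots> = (\<Prod>j<K ((q ^^ n) e). W ((P ^^ (R n + j)) e))"
      by (simp add: qR funpow_add add.commute)
    finally show ?case by (simp add: RS prod_lessThan_add)
  qed
  have gap: "(P ^^ j) e \<notin> S" if "R i < j" "j < R (Suc i)" for i j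
  proof -
    define j' where "j' = j - R i"
    have j': "j = R i + j'" "0 < j'" using that unfolding j'_def by auto
    have "j' < K ((q ^^ i) e)" using that j' RS by simp
    then have "(P ^^ j') ((q ^^ i) e) \<notin> S" using K3 qS j'(2) by blast
    moreover have "(P ^^ j') ((q ^^ i) e) = (P ^^ j) e"
    proof -
      have "(P ^^ j') ((q ^^ i) e) = (P ^^ j') ((P ^^ R i) e)" by (simp only: qR)
      also have "\<dots> = (P ^^ (j' + R i)) e" by (simp only: funpow_add o_apply)
      also have "\<dots> = (P ^^ j) e" by (simp only: j' add.commute)
      finally show ?thesis .
    qed
    ultimately show ?thesis by simp
  qed
  have Rmono: "strict_mono R" by (rule strict_monoI_Suc) (simp add: RS Kpos)
  define n0 where "n0 = plen q e"
  note n0p = plen_props[OF per, folded n0_def]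
  define N where "N = R n0"
  have Npos: "0 < N" unfolding N_def using strict_monoD[OF Rmono n0p(1)] R0 by simp
  have PN: "(P ^^ N) e = e" unfolding N_def using qR[of n0] n0p(2) by simp
  have perP: "\<exists>n>0. (P ^^ n) e = e" using Npos PN by blast
  define L where "L = plen P e"
  note Lp = plen_props[OF perP, folded L_def]
  have LN: "L \<le> N" unfolding L_def by (rule plen_le[OF Npos PN])
  have "L = N"
  proof (rule ccontr)
    assume "L \<noteq> N"
    then have LN': "L < N" using LN by simp
    define m where "m = (LEAST i. L < R i)"
    have ex: "L < R n0" using LN' N_def by simp
    have m1: "L < R m" unfolding m_def by (rule LeastI[of _ n0]) (rule ex)
    have m0: "m \<noteq> 0"
    proof
      assume "m = 0" then show False using m1 R0 by simp
    qed
    then obtain i where i: "m = Suc i" using not0_implies_Suc by blast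
    have "i < m" using i by simp
    then have "\<not> L < R i" using not_less_Least[of i "\<lambda>i. L < R i"] unfolding m_def by blast
    then have Ri: "R i \<le> L" by simp
    have "R i = L"
    proof (rule ccontr)
      assume "R i \<noteq> L"
      then have "R i < L" using Ri by simp
      then have "(P ^^ L) e \<notin> S" using gap m1 i by blast
      then show False using Lp(2) eS by simp
    qed
    have ipos: "0 < i" using \<open>R i = L\<close> R0 Lp(1) by (cases i) auto
    have "i < n0"
    proof (rule ccontr)
      assume "\<not> i < n0"
      then have "R n0 \<le> R i" using Rmono by (simp add: strict_mono_less_eq)
      then show False using \<open>R i = L\<close> LN' N_def by simp
    qed
    moreover have "(q ^^ i) e = e" using qR \<open>R i = L\<close> Lp(2) by simp
    ultimately show False using n0p(3) ipos by blast
  qed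
  have "oprod q \<omega> e = (\<Prod>j<R n0. W ((P ^^ j) e))" unfolding oprod_def n0_def[symmetric] by (rule prodR)
  also have "\<dots> = oprod P W e" unfolding oprod_def L_def[symmetric] using \<open>L = N\<close> N_def by simp
  finally show ?thesis using perP by blast
qed

lemma fr1: "g f \<in> S \<Longrightarrow> first_return g S f = g f"
  unfolding first_return_def
  by (subst Least_equality[of _ 1]) auto

lemma fr2:
  assumes a: "g f \<notin> S" "g (g f) \<in> S"
  shows "first_return g S f = g (g f)"
proof -
  have "(LEAST k. 0 < k \<and> (g ^^ k) f \<in> S) = 2"
  proof (rule Least_equality)
    show "0 < (2::nat) \<and> (g ^^ 2) f \<in> S" using a by (simp add: numeral_2_eq_2)
    fix y :: nat assume h: "0 < y \<and> (g ^^ y) f \<in> S"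
    show "2 \<le> y"
    proof (rule ccontr)
      assume "\<not> 2 \<le> y"
      then have "y = 1" using h by auto
      then show False using h a by auto
    qed
  qed
  then show ?thesis unfolding first_return_def by (simp add: numeral_2_eq_2)
qed

lemma less3_cases: "(j::nat) < 3 \<Longrightarrow> j = 0 \<or> j = 1 \<or> j = 2" by auto

lemma fr3:
  assumes a: "g f \<notin> S" "g (g f) \<notin> S" "g (g (g f)) \<in> S"
  shows "first_return g S f = g (g (g f))"
proof -
  have "(LEAST k. 0 < k \<and> (g ^^ k) f \<in> S) = 3"
  proof (rule Least_equality)
    show "0 < (3::nat) \<and> (g ^^ 3) f \<in> S" using a by (simp add: numeral_3_eq_3)
    fix y :: nat assume h: "0 < y \<and> (g ^^ y) f \<in> S"
    show "3 \<le> y"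
    proof (rule ccontr)
      assume "\<not> 3 \<le> y"
      then have "y = 1 \<or> y = 2" using h by auto
      then show False using h a by (auto simp: numeral_2_eq_2)
    qed
  qed
  then show ?thesis unfolding first_return_def by (simp add: numeral_3_eq_3)
qed

lemma blk1: "q f = p f \<Longrightarrow> \<omega> f = W f \<Longrightarrow>
  \<exists>k>0. q f = (p ^^ k) f \<and> (\<forall>j. 0 < j \<longrightarrow> j < k \<longrightarrow> (p ^^ j) f \<notin> S) \<and> \<omega> f = (\<Prod>j<k. W ((p ^^ j) f))"
  by (rule exI[of _ 1]) auto

lemma blk2: "p f \<notin> S \<Longrightarrow> q f = p (p f) \<Longrightarrow> \<omega> f = W f * W (p f) \<Longrightarrow>
  \<exists>k>0. q f = (p ^^ k) f \<and> (\<forall>j. 0 < j \<longrightarrow> j < k \<longrightarrow> (p ^^ j) f \<notin> S) \<and> \<omega> f = (\<Prod>j<k. W ((p ^^ j) f))"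
  apply (rule exI[of _ 2])
  apply (auto simp: numeral_2_eq_2 less_Suc_eq)
  done

lemma blk3: "p f \<notin> S \<Longrightarrow> p (p f) \<notin> S \<Longrightarrow> q f = p (p (p f)) \<Longrightarrow> \<omega> f = W f * W (p f) * W (p (p f)) \<Longrightarrow>
  \<exists>k>0. q f = (p ^^ k) f \<and> (\<forall>j. 0 < j \<longrightarrow> j < k \<longrightarrow> (p ^^ j) f \<notin> S) \<and> \<omega> f = (\<Prod>j<k. W ((p ^^ j) f))"
  apply (rule exI[of _ 3])
  apply (auto simp: numeral_3_eq_3 less_Suc_eq mult.assoc)
  done

subsection \<open>Tilings\<close>

definition phiX :: "('e,'v,complex ^ 'n) tiling \<Rightarrow> 'e \<Rightarrow> complex" where
  "phiX X x = pairing (lab X (bv X x)) (lab X (wv X x))"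
definition psiX :: "('e,'v,complex ^ 'n) tiling \<Rightarrow> 'e \<Rightarrow> complex" where
  "psiX X x = pairing (lab X (bv X x)) (lab X (wv X (facerot X x)))"
definition omB :: "('e,'v,complex ^ 'n) tiling \<Rightarrow> 'e \<Rightarrow> complex" where
  "omB X x = phiX X x / psiX X x"
definition omW :: "('e,'v,complex ^ 'n) tiling \<Rightarrow> 'e \<Rightarrow> complex" where
  "omW X x = phiX X (facerot X x) / psiX X x"

lemma tilingD0:
  assumes "is_tiling X"
  shows "finite (edges X) \<and> bij_betw (rotW X) (edges X) (edges X) \<and>
    bij_betw (rotB X) (edges X) (edges X) \<and>
    (\<forall>e\<in>edges X. wv X (rotW X e) = wv X e) \<and>
    (\<forall>e\<in>edges X. bv X (rotB X e) = bv X e) \<and>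
    (\<forall>e\<in>edges X. \<forall>f\<in>edges X. wv X e = wv X f \<longrightarrow> (\<exists>k. (rotW X ^^ k) e = f)) \<and>
    (\<forall>e\<in>edges X. \<forall>f\<in>edges X. bv X e = bv X f \<longrightarrow> (\<exists>k. (rotB X ^^ k) e = f)) \<and>
    (\<forall>v\<in>verts X. lab X v \<noteq> 0) \<and>
    edges X \<noteq> {}"
  using assms unfolding is_tiling_def by (elim conjE) (intro conjI; assumption)

lemma tilingD:
  assumes "is_tiling X"
  shows "finite (edges X)" "bij_betw (rotW X) (edges X) (edges X)"
    "bij_betw (rotB X) (edges X) (edges X)"
    "\<And>e. e \<in> edges X \<Longrightarrow> wv X (rotW X e) = wv X e"
    "\<And>e. e \<in> edges X \<Longrightarrow> bv X (rotB X e) = bv X e"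
    "\<And>e f. e \<in> edges X \<Longrightarrow> f \<in> edges X \<Longrightarrow> wv X e = wv X f \<Longrightarrow> \<exists>k. (rotW X ^^ k) e = f"
    "\<And>e f. e \<in> edges X \<Longrightarrow> f \<in> edges X \<Longrightarrow> bv X e = bv X f \<Longrightarrow> \<exists>k. (rotB X ^^ k) e = f"
    "\<And>v. v \<in> verts X \<Longrightarrow> lab X v \<noteq> 0"
    "edges X \<noteq> {}"
  using tilingD0[OF assms] by auto

lemma facerot_apply: "facerot X e = rotW X (rotB X e)" by (simp add: facerot_def)

lemma facerot_bij: "is_tiling X \<Longrightarrow> bij_betw (facerot X) (edges X) (edges X)"
  unfolding facerot_def by (rule bij_betw_trans[OF tilingD(3) tilingD(2)])

lemma facerot_in: "is_tiling X \<Longrightarrow> e \<in> edges X \<Longrightarrow> facerot X e \<in> edges X"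
  using facerot_bij[of X] bij_betwE by blast

lemma facerot_period:
  assumes t: "is_tiling X" and e: "e \<in> edges X" shows "\<exists>n>0. (facerot X ^^ n) e = e"
  by (rule period_exists[OF tilingD(1)[OF t] facerot_bij[OF t] e])

lemma mult_B: "face_multiratio X e = oprod (facerot X) (omB X) e"
proof -
  have s: "\<And>i. (facerot X ^^ Suc i) e = facerot X ((facerot X ^^ i) e)" by simp
  show ?thesis
    unfolding face_multiratio_def oprod_def omB_def phiX_def psiX_def face_len_def plen_def prod_dividef s ..
qed


lemma mult_W:
  assumes "\<exists>n>0. (facerot X ^^ n) e = e"
  shows "face_multiratio X e = oprod (facerot X) (omW X) e"
proof -
  note Lp = plen_props[OF assms]
  have "(\<Prod>i<plen (facerot X) e. phiX X ((facerot X ^^ i) e)) =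
        (\<Prod>i<plen (facerot X) e. phiX X ((facerot X ^^ i) (facerot X e)))"
    by (rule prod_period_shift[OF Lp(2) Lp(1), symmetric])
  also have "\<dots> = (\<Prod>i<plen (facerot X) e. phiX X (facerot X ((facerot X ^^ i) e)))"
    by (rule prod.cong) (rule refl, rule arg_cong[where f="phiX X"], rule funpow_swap1[symmetric])
  finally have *: "(\<Prod>i<plen (facerot X) e. phiX X ((facerot X ^^ i) e)) =
     (\<Prod>i<plen (facerot X) e. phiX X (facerot X ((facerot X ^^ i) e)))" .
  show ?thesis
    unfolding mult_B oprod_def omB_def omW_def prod_dividef * ..
qed

lemma coherent_nz:
  assumes "is_tiling X" "coherent X" "e \<in> edges X"
  shows "phiX X e \<noteq> 0" "psiX X e \<noteq> 0"
proof -
  have per: "\<exists>n>0. (facerot X ^^ n) e = e" by (rule facerot_period[OF assms(1,3)])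
  note Lp = plen_props[OF per]
  have "face_multiratio X e = 1" using assms(2,3) unfolding coherent_def by blast
  then have h: "(\<Prod>i<plen (facerot X) e. phiX X ((facerot X ^^ i) e)) /
     (\<Prod>i<plen (facerot X) e. psiX X ((facerot X ^^ i) e)) = 1"
    unfolding mult_B oprod_def omB_def prod_dividef .
  then have d: "(\<Prod>i<plen (facerot X) e. psiX X ((facerot X ^^ i) e)) \<noteq> 0" by auto
  with h have n: "(\<Prod>i<plen (facerot X) e. phiX X ((facerot X ^^ i) e)) \<noteq> 0" by auto
  have d': "\<forall>i\<in>{..<plen (facerot X) e}. psiX X ((facerot X ^^ i) e) \<noteq> 0"
    using d by (simp add: prod_zero_iff)
  have n': "\<forall>i\<in>{..<plen (facerot X) e}. phiX X ((facerot X ^^ i) e) \<noteq> 0"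
    using n by (simp add: prod_zero_iff)
  have "0 \<in> {..<plen (facerot X) e}" using Lp(1) by simp
  then have "psiX X ((facerot X ^^ 0) e) \<noteq> 0" "phiX X ((facerot X ^^ 0) e) \<noteq> 0"
    using d' n' by blast+
  then show "phiX X e \<noteq> 0" "psiX X e \<noteq> 0" by simp_all
qed


lemma dep2:
  fixes f :: "'i \<Rightarrow> complex ^ 'n"
  assumes "u \<noteq> u'" "fam_dependent {u, u'} f" "f u \<noteq> 0" "f u' \<noteq> 0"
  shows "\<exists>l. l \<noteq> 0 \<and> f u' = l *s f u"
proof -
  obtain c where c: "c u \<noteq> 0 \<or> c u' \<noteq> 0" "c u *s f u + c u' *s f u' = 0"
    using assms(1,2) unfolding fam_dependent_def by auto
  have cu': "c u' \<noteq> 0"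
  proof
    assume h: "c u' = 0"
    then have "c u *s f u = 0" using c(2) by simp
    then show False using h c(1) assms(3) by simp
  qed
  have "f u' = (- c u / c u') *s f u"
  proof -
    have "c u' *s f u' = - (c u *s f u)" using c(2) by (simp add: eq_neg_iff_add_eq_0 add.commute)
    then have "(1 / c u') *s (c u' *s f u') = (1 / c u') *s (- (c u *s f u))" by simp
    then show ?thesis using cu' by (simp add: vector_smult_assoc)
  qed
  moreover have "- c u / c u' \<noteq> 0"
  proof
    assume "- c u / c u' = 0"
    then have "f u' = 0" using calculation by simp
    then show False using assms(4) by simp
  qed
  ultimately show ?thesis by blast
qed

lemma fix_funpow: "g x = x \<Longrightarrow> (g ^^ k) x = x"
  by (induction k) auto

lemma two_cycle_funpow: "g a = b \<Longrightarrow> g b = a \<Longrightarrow> (g ^^ k) a \<in> {a, b}"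
  by (induction k) auto

lemma ratio_scale: "l \<noteq> 0 \<Longrightarrow> pairing (l *s m) x / pairing (l *s m) y = pairing m x / pairing m y"
  by (simp add: pairing_scale1)

lemma rw_block:
  assumes rw: "remove_white X Y" and tX: "is_tiling X"
    and circ: "\<forall>v\<in>whites X. is_circuit (nbrsW X v) (lab X)"
    and nz: "\<forall>e\<in>edges X. phiX X e \<noteq> 0"
  shows "edges Y \<subseteq> edges X"
    "\<forall>f\<in>edges Y. facerot Y f \<in> edges Y \<and> (\<exists>k>0. facerot Y f = (facerot X ^^ k) f \<and>
        (\<forall>j. 0 < j \<longrightarrow> j < k \<longrightarrow> (facerot X ^^ j) f \<notin> edges Y) \<and>
        omB Y f = (\<Prod>j<k. omB X ((facerot X ^^ j) f)))"
    "\<forall>x\<in>edges X - edges Y. facerot X x \<notin> edges Y \<longrightarrow> omB X x = 1"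
proof -
  obtain e1 e2 where e1: "e1 \<in> edges X" and e2: "e2 \<in> edges X" and e12: "e1 \<noteq> e2"
    and Wset: "{f\<in>edges X. wv X f = wv X e1} = {e1, e2}"
    and u12: "bv X e1 \<noteq> bv X e2"
    and EY: "edges Y = edges X - {e1, e2}"
    and Yd: "\<forall>f\<in>edges Y. wv Y f = wv X f \<and>
        bv Y f = (if bv X f = bv X e2 then bv X e1 else bv X f) \<and>
        rotW Y f = rotW X f \<and>
        rotB Y f = first_return (rotB X \<circ> Transposition.transpose e1 e2) (edges Y) f"
    and Yl: "\<forall>v\<in>verts Y. lab Y v = lab X v"
    using rw unfolding remove_white_def by blast
  define S where "S = edges X"
  define S' where "S' = edges Y"
  define A where "A = wv X e1"
  define u where "u = bv X e1"
  define u' where "u' = bv X e2"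
  define L where "L = lab X"
  define p where "p = facerot X"
  note td = tilingD[OF tX]
  have rWS: "\<And>x. x \<in> S \<Longrightarrow> rotW X x \<in> S" using td(2) bij_betwE unfolding S_def by blast
  have rBS: "\<And>x. x \<in> S \<Longrightarrow> rotB X x \<in> S" using td(3) bij_betwE unfolding S_def by blast
  have rWinj: "\<And>x y. x \<in> S \<Longrightarrow> y \<in> S \<Longrightarrow> rotW X x = rotW X y \<Longrightarrow> x = y"
    using td(2) unfolding bij_betw_def inj_on_def S_def by blast
  have rBinj: "\<And>x y. x \<in> S \<Longrightarrow> y \<in> S \<Longrightarrow> rotB X x = rotB X y \<Longrightarrow> x = y"
    using td(3) unfolding bij_betw_def inj_on_def S_def by blast
  have wvW: "\<And>x. x \<in> S \<Longrightarrow> wv X (rotW X x) = wv X x" using td(4) S_def by blast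
  have bvB: "\<And>x. x \<in> S \<Longrightarrow> bv X (rotB X x) = bv X x" using td(5) S_def by blast
  have pdef: "\<And>x. p x = rotW X (rotB X x)" unfolding p_def facerot_apply ..
  have pS: "\<And>x. x \<in> S \<Longrightarrow> p x \<in> S" using pdef rWS rBS by simp
  have wvp: "\<And>x. x \<in> S \<Longrightarrow> wv X (p x) = wv X (rotB X x)" using pdef wvW rBS by simp
  have Wiff: "\<And>f. f \<in> S \<Longrightarrow> wv X f = A \<longleftrightarrow> f = e1 \<or> f = e2"
    using Wset unfolding A_def S_def by blast
  have e2A: "wv X e2 = A" using Wiff e2 S_def by blast
  have e1S: "e1 \<in> S" and e2S: "e2 \<in> S" using e1 e2 S_def by auto
  have S'eq: "S' = S - {e1, e2}" using EY S_def S'_def by simp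
  have rW1: "rotW X e1 = e2"
  proof -
    have "rotW X e1 \<in> S" "wv X (rotW X e1) = A" using rWS e1S wvW A_def by auto
    then have c: "rotW X e1 = e1 \<or> rotW X e1 = e2" using Wiff by blast
    have "rotW X e1 \<noteq> e1"
    proof
      assume h: "rotW X e1 = e1"
      have "wv X e1 = wv X e2" using e2A A_def by simp
      then obtain k where "(rotW X ^^ k) e1 = e2" using td(6)[OF e1 e2] by blast
      then show False using fix_funpow[of "rotW X" e1 k, OF h] e12 by simp
    qed
    then show ?thesis using c by blast
  qed
  have rW2: "rotW X e2 = e1"
  proof -
    have "rotW X e2 \<in> S" "wv X (rotW X e2) = A" using rWS e2S wvW e2A by auto
    then have c: "rotW X e2 = e1 \<or> rotW X e2 = e2" using Wiff by blast
    have "rotW X e2 \<noteq> e2" using rW1 rWinj e1S e2S e12 by metis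
    then show ?thesis using c by blast
  qed
  have rWnot: "\<And>y. y \<in> S \<Longrightarrow> y \<noteq> e1 \<Longrightarrow> y \<noteq> e2 \<Longrightarrow> rotW X y \<noteq> e1 \<and> rotW X y \<noteq> e2"
    using rW1 rW2 rWinj e1S e2S by metis
  have Lu: "L u \<noteq> 0" and Lu': "L u' \<noteq> 0"
    using td(8) e1 e2 unfolding L_def u_def u'_def verts_def blacks_def by auto
  have AW: "A \<in> whites X" using e1 unfolding A_def whites_def by auto
  have nb: "nbrsW X A = {u, u'}"
  proof -
    have "nbrsW X A = bv X ` {f\<in>edges X. wv X f = A}" unfolding nbrsW_def by auto
    also have "\<dots> = {u, u'}" using Wset unfolding A_def u_def u'_def by simp
    finally show ?thesis .
  qed
  have "is_circuit {u, u'} (lab X)" using circ AW nb by metis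
  then have "fam_dependent {u, u'} L" unfolding is_circuit_def L_def by blast
  then obtain lam where lam: "lam \<noteq> 0" "L u' = lam *s L u"
    using dep2[of u u' L] u12 Lu Lu' unfolding u_def u'_def by blast
  have nzA: "pairing (L u) (L A) \<noteq> 0" using nz e1 unfolding phiX_def L_def u_def A_def by blast
  have YlabB: "\<And>f. f \<in> S' \<Longrightarrow> lab Y (bv Y f) = L (bv Y f)"
    using Yl unfolding verts_def blacks_def S'_def L_def by blast
  have YlabW: "\<And>f. f \<in> S' \<Longrightarrow> lab Y (wv Y f) = L (wv Y f)"
    using Yl unfolding verts_def whites_def S'_def L_def by blast
  have Ywv: "\<And>f. f \<in> S' \<Longrightarrow> wv Y f = wv X f" using Yd S'_def by blast
  have Ybv: "\<And>f. f \<in> S' \<Longrightarrow> bv Y f = (if bv X f = u' then u else bv X f)"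
    using Yd S'_def u_def u'_def by blast
  have YrW: "\<And>f. f \<in> S' \<Longrightarrow> rotW Y f = rotW X f" using Yd S'_def by blast
  have YrB: "\<And>f. f \<in> S' \<Longrightarrow> rotB Y f = first_return (rotB X \<circ> Transposition.transpose e1 e2) S' f"
    using Yd S'_def by blast
  have ratio: "\<And>f a b. f \<in> S' \<Longrightarrow> pairing (lab Y (bv Y f)) a / pairing (lab Y (bv Y f)) b
      = pairing (L (bv X f)) a / pairing (L (bv X f)) b"
  proof -
    fix f a b assume f: "f \<in> S'"
    show "pairing (lab Y (bv Y f)) a / pairing (lab Y (bv Y f)) b
      = pairing (L (bv X f)) a / pairing (L (bv X f)) b"
    proof (cases "bv X f = u'")
      case True
      then show ?thesis using YlabB[OF f] Ybv[OF f] lam ratio_scale[of lam "L u" a b] by simp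
    next
      case False
      then show ?thesis using YlabB[OF f] Ybv[OF f] by simp
    qed
  qed
  have omBX: "\<And>x. omB X x = pairing (L (bv X x)) (L (wv X x)) / pairing (L (bv X x)) (L (wv X (p x)))"
    unfolding omB_def phiX_def psiX_def L_def p_def ..
  have omBY: "\<And>f. f \<in> S' \<Longrightarrow> facerot Y f \<in> S' \<Longrightarrow>
     omB Y f = pairing (L (bv X f)) (L (wv X f)) / pairing (L (bv X f)) (L (wv X (facerot Y f)))"
  proof -
    fix f assume f: "f \<in> S'" and ff: "facerot Y f \<in> S'"
    have "omB Y f = pairing (lab Y (bv Y f)) (lab Y (wv Y f)) / pairing (lab Y (bv Y f)) (lab Y (wv Y (facerot Y f)))"
      unfolding omB_def phiX_def psiX_def ..
    also have "\<dots> = pairing (lab Y (bv Y f)) (L (wv X f)) / pairing (lab Y (bv Y f)) (L (wv X (facerot Y f)))"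
      using YlabW[OF f] YlabW[OF ff] Ywv[OF f] Ywv[OF ff] by simp
    also have "\<dots> = pairing (L (bv X f)) (L (wv X f)) / pairing (L (bv X f)) (L (wv X (facerot Y f)))"
      by (rule ratio[OF f])
    finally show "omB Y f = pairing (L (bv X f)) (L (wv X f)) / pairing (L (bv X f)) (L (wv X (facerot Y f)))" .
  qed
  have labu': "L u' = lam *s L u" by (rule lam(2))
  show "edges Y \<subseteq> edges X" using EY by blast
  show "\<forall>x\<in>edges X - edges Y. facerot X x \<notin> edges Y \<longrightarrow> omB X x = 1"
  proof (intro ballI impI)
    fix x assume x: "x \<in> edges X - edges Y" and px: "facerot X x \<notin> edges Y"
    have xS: "x \<in> S" and xe: "x = e1 \<or> x = e2" using x EY S_def by auto
    have "p x \<in> S" using pS xS .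
    then have "p x = e1 \<or> p x = e2" using px EY S_def p_def by auto
    then have "wv X (p x) = wv X x" using xe e2A A_def by auto
    then have "omB X x = phiX X x / phiX X x" unfolding omB_def psiX_def phiX_def p_def by simp
    then show "omB X x = 1" using nz xS S_def by simp
  qed
  let ?g = "rotB X \<circ> Transposition.transpose e1 e2"
  have g1: "?g e1 = rotB X e2" and g2: "?g e2 = rotB X e1" by simp_all
  have gf: "\<And>f. f \<in> S' \<Longrightarrow> ?g f = rotB X f" using S'eq by auto
  show "\<forall>f\<in>edges Y. facerot Y f \<in> edges Y \<and> (\<exists>k>0. facerot Y f = (facerot X ^^ k) f \<and>
        (\<forall>j. 0 < j \<longrightarrow> j < k \<longrightarrow> (facerot X ^^ j) f \<notin> edges Y) \<and>
        omB Y f = (\<Prod>j<k. omB X ((facerot X ^^ j) f)))"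
    unfolding S'_def[symmetric] p_def[symmetric]
  proof
    fix f assume fS': "f \<in> S'"
    have fS: "f \<in> S" and f1: "f \<noteq> e1" and f2: "f \<noteq> e2" using fS' S'eq by auto
    have fY: "facerot Y f = rotW X (rotB Y f)" if "rotB Y f \<in> S'"
      using YrW[OF that] facerot_apply by metis
    define y where "y = rotB X f"
    have yS: "y \<in> S" using rBS fS y_def by simp
    have bvy: "bv X y = bv X f" using bvB fS y_def by simp
    consider (a) "y \<noteq> e1 \<and> y \<noteq> e2" | (b) "y = e1" | (c) "y = e2" by blast
    then show "facerot Y f \<in> S' \<and> (\<exists>k>0. facerot Y f = (p ^^ k) f \<and>
        (\<forall>j. 0 < j \<longrightarrow> j < k \<longrightarrow> (p ^^ j) f \<notin> S') \<and>
        omB Y f = (\<Prod>j<k. omB X ((p ^^ j) f)))"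
    proof cases
      case a
      have yS': "y \<in> S'" using a yS S'eq by simp
      have rb: "rotB Y f = y" using YrB[OF fS'] fr1[of ?g f S'] gf[OF fS'] yS' y_def by simp
      have pf: "p f = rotW X y" using pdef y_def by simp
      have fy: "facerot Y f = p f" using fY rb yS' pf by simp
      have pfS': "p f \<in> S'" using pf rWnot[OF yS] a rWS[OF yS] S'eq by auto
      have om: "omB Y f = omB X f" using omBY[OF fS'] fy pfS' omBX by simp
      show ?thesis using pfS' fy om blk1[of "facerot Y" f p "omB Y" "omB X" S'] by simp
    next
      case b
      have bu: "bv X f = u" using bvy b u_def by simp
      have pf: "p f = e2" using pdef y_def b rW1 by simp
      have pfA: "wv X (p f) = A" using pf e2A by simp
      define b1 where "b1 = rotB X e2"
      have b1S: "b1 \<in> S" using rBS e2S b1_def by simp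
      have bvb1: "bv X b1 = u'" using bvB e2S b1_def u'_def by simp
      have b1ne1: "b1 \<noteq> e1" using bvb1 u12 u_def u'_def by auto
      show ?thesis
      proof (cases "b1 = e2")
        case False
        have b1S': "b1 \<in> S'" using b1S b1ne1 False S'eq by simp
        have rb: "rotB Y f = b1"
          using YrB[OF fS'] fr2[of ?g f S'] gf[OF fS'] b1S' b1_def y_def b e1S S'eq by simp
        have fy: "facerot Y f = rotW X b1" using fY rb b1S' by simp
        have ppf: "p (p f) = rotW X b1" using pf pdef b1_def by simp
        have fyS': "facerot Y f \<in> S'" using fy rWnot[OF b1S b1ne1 False] rWS[OF b1S] S'eq by simp
        have w1: "wv X (p e2) = wv X (rotW X b1)" using ppf pf by simp
        have "omB Y f = pairing (L u) (L (wv X f)) / pairing (L u) (L (wv X (rotW X b1)))"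
          using omBY[OF fS' fyS'] fy bu by simp
        also have "\<dots> = (pairing (L u) (L (wv X f)) / pairing (L u) (L A)) *
            (pairing (L u') (L A) / pairing (L u') (L (wv X (rotW X b1))))"
          using nzA lam by (simp add: labu' pairing_scale1)
        also have "\<dots> = omB X f * omB X (p f)"
          using omBX bu pfA pf w1 e2A u'_def by simp
        finally have om: "omB Y f = omB X f * omB X (p f)" .
        have "p f \<notin> S'" using pf S'eq by simp
        then show ?thesis using fyS' fy ppf om blk2[of p f S' "facerot Y" "omB Y" "omB X"] by simp
      next
        case True
        define a1 where "a1 = rotB X e1"
        have a1S: "a1 \<in> S" using rBS e1S a1_def by simp
        have a1ne1: "a1 \<noteq> e1" using rBinj[OF fS e1S] y_def b f1 a1_def by metis
        have a1ne2: "a1 \<noteq> e2" using bvB[OF e1S] a1_def u12 by auto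
        have a1S': "a1 \<in> S'" using a1S a1ne1 a1ne2 S'eq by simp
        have rb: "rotB Y f = a1"
          using YrB[OF fS'] fr3[of ?g f S'] gf[OF fS'] a1S' a1_def b1_def True y_def b e1S e2S S'eq by simp
        have fy: "facerot Y f = rotW X a1" using fY rb a1S' by simp
        have ppf: "p (p f) = e1" using pf pdef b1_def True rW2 by simp
        have pppf: "p (p (p f)) = rotW X a1" using ppf pdef a1_def by simp
        have fyS': "facerot Y f \<in> S'" using fy rWnot[OF a1S a1ne1 a1ne2] rWS[OF a1S] S'eq by simp
        have "omB Y f = pairing (L u) (L (wv X f)) / pairing (L u) (L (wv X (rotW X a1)))"
          using omBY[OF fS' fyS'] fy bu by simp
        also have "\<dots> = (pairing (L u) (L (wv X f)) / pairing (L u) (L A)) *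
            (pairing (L u') (L A) / pairing (L u') (L A)) *
            (pairing (L u) (L A) / pairing (L u) (L (wv X (rotW X a1))))"
          using nzA lam by (simp add: labu' pairing_scale1)
        also have "\<dots> = omB X f * omB X (p f) * omB X (p (p f))"
          using omBX bu pfA pf ppf pppf e2A u'_def u_def A_def by simp
        finally have om: "omB Y f = omB X f * omB X (p f) * omB X (p (p f))" .
        have "p f \<notin> S'" "p (p f) \<notin> S'" using pf ppf S'eq by simp_all
        then show ?thesis using fyS' fy pppf om blk3[of p f S' "facerot Y" "omB Y" "omB X"] by simp
      qed
    next
      case c
      have bu: "bv X f = u'" using bvy c u'_def by simp
      have pf: "p f = e1" using pdef y_def c rW2 by simp
      have pfA: "wv X (p f) = A" using pf A_def by simp
      define a1 where "a1 = rotB X e1"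
      have a1S: "a1 \<in> S" using rBS e1S a1_def by simp
      have bva1: "bv X a1 = u" using bvB e1S a1_def u_def by simp
      have a1ne2: "a1 \<noteq> e2" using bva1 u12 u_def u'_def by auto
      show ?thesis
      proof (cases "a1 = e1")
        case False
        have a1S': "a1 \<in> S'" using a1S a1ne2 False S'eq by simp
        have rb: "rotB Y f = a1"
          using YrB[OF fS'] fr2[of ?g f S'] gf[OF fS'] a1S' a1_def y_def c e2S S'eq by simp
        have fy: "facerot Y f = rotW X a1" using fY rb a1S' by simp
        have ppf: "p (p f) = rotW X a1" using pf pdef a1_def by simp
        have fyS': "facerot Y f \<in> S'" using fy rWnot[OF a1S False a1ne2] rWS[OF a1S] S'eq by simp
        have "omB Y f = pairing (L u') (L (wv X f)) / pairing (L u') (L (wv X (rotW X a1)))"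
          using omBY[OF fS' fyS'] fy bu by simp
        also have "\<dots> = (pairing (L u') (L (wv X f)) / pairing (L u') (L A)) *
            (pairing (L u) (L A) / pairing (L u) (L (wv X (rotW X a1))))"
          using nzA lam by (simp add: labu' pairing_scale1)
        also have "\<dots> = omB X f * omB X (p f)"
          using omBX bu pfA pf ppf u_def A_def by simp
        finally have om: "omB Y f = omB X f * omB X (p f)" .
        have "p f \<notin> S'" using pf S'eq by simp
        then show ?thesis using fyS' fy ppf om blk2[of p f S' "facerot Y" "omB Y" "omB X"] by simp
      next
        case True
        define b1 where "b1 = rotB X e2"
        have b1S: "b1 \<in> S" using rBS e2S b1_def by simp
        have b1ne2: "b1 \<noteq> e2" using rBinj[OF fS e2S] y_def c f2 b1_def by metis
        have b1ne1: "b1 \<noteq> e1" using bvB[OF e2S] b1_def u12 by auto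
        have b1S': "b1 \<in> S'" using b1S b1ne1 b1ne2 S'eq by simp
        have rb: "rotB Y f = b1"
          using YrB[OF fS'] fr3[of ?g f S'] gf[OF fS'] b1S' a1_def b1_def True y_def c e1S e2S S'eq by simp
        have fy: "facerot Y f = rotW X b1" using fY rb b1S' by simp
        have ppf: "p (p f) = e2" using pf pdef a1_def True rW1 by simp
        have pppf: "p (p (p f)) = rotW X b1" using ppf pdef b1_def by simp
        have fyS': "facerot Y f \<in> S'" using fy rWnot[OF b1S b1ne1 b1ne2] rWS[OF b1S] S'eq by simp
        have "omB Y f = pairing (L u') (L (wv X f)) / pairing (L u') (L (wv X (rotW X b1)))"
          using omBY[OF fS' fyS'] fy bu by simp
        also have "\<dots> = (pairing (L u') (L (wv X f)) / pairing (L u') (L A)) *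
            (pairing (L u) (L A) / pairing (L u) (L A)) *
            (pairing (L u') (L A) / pairing (L u') (L (wv X (rotW X b1))))"
          using nzA lam by (simp add: labu' pairing_scale1)
        also have "\<dots> = omB X f * omB X (p f) * omB X (p (p f))"
          using omBX bu pfA pf ppf pppf e2A u'_def u_def A_def by simp
        finally have om: "omB Y f = omB X f * omB X (p f) * omB X (p (p f))" .
        have "p f \<notin> S'" "p (p f) \<notin> S'" using pf ppf S'eq by simp_all
        then show ?thesis using fyS' fy pppf om blk3[of p f S' "facerot Y" "omB Y" "omB X"] by simp
      qed
    qed
  qed
qed


lemma ratio_scaleW: "l \<noteq> 0 \<Longrightarrow> pairing a (l *s x) / pairing b (l *s x) = pairing a x / pairing b x"
  by (simp add: pairing_scale2)

lemma rb_block: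
  assumes rb: "remove_black X Y" and tX: "is_tiling X"
    and circ: "\<forall>v\<in>blacks X. is_circuit (nbrsB X v) (lab X)"
    and nz: "\<forall>e\<in>edges X. phiX X e \<noteq> 0"
  shows "edges Y \<subseteq> edges X"
    "\<forall>f\<in>edges Y. facerot Y f \<in> edges Y \<and> (\<exists>k>0. facerot Y f = (facerot X ^^ k) f \<and>
        (\<forall>j. 0 < j \<longrightarrow> j < k \<longrightarrow> (facerot X ^^ j) f \<notin> edges Y) \<and>
        omW Y f = (\<Prod>j<k. omW X ((facerot X ^^ j) f)))"
    "\<forall>x\<in>edges X - edges Y. facerot X x \<notin> edges Y \<longrightarrow> omW X x = 1"
proof -
  obtain e1 e2 where e1: "e1 \<in> edges X" and e2: "e2 \<in> edges X" and e12: "e1 \<noteq> e2"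
    and Bset: "{f\<in>edges X. bv X f = bv X e1} = {e1, e2}"
    and A12: "wv X e1 \<noteq> wv X e2"
    and EY: "edges Y = edges X - {e1, e2}"
    and Yd: "\<forall>f\<in>edges Y. bv Y f = bv X f \<and>
        wv Y f = (if wv X f = wv X e2 then wv X e1 else wv X f) \<and>
        rotB Y f = rotB X f \<and>
        rotW Y f = first_return (rotW X \<circ> Transposition.transpose e1 e2) (edges Y) f"
    and Yl: "\<forall>v\<in>verts Y. lab Y v = lab X v"
    using rb unfolding remove_black_def by blast
  define S where "S = edges X"
  define S' where "S' = edges Y"
  define b where "b = bv X e1"
  define A1 where "A1 = wv X e1"
  define A2 where "A2 = wv X e2"
  define L where "L = lab X"
  define p where "p = facerot X"
  note td = tilingD[OF tX]
  have rWS: "\<And>x. x \<in> S \<Longrightarrow> rotW X x \<in> S" using td(2) bij_betwE unfolding S_def by blast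
  have rBS: "\<And>x. x \<in> S \<Longrightarrow> rotB X x \<in> S" using td(3) bij_betwE unfolding S_def by blast
  have rWinj: "\<And>x y. x \<in> S \<Longrightarrow> y \<in> S \<Longrightarrow> rotW X x = rotW X y \<Longrightarrow> x = y"
    using td(2) unfolding bij_betw_def inj_on_def S_def by blast
  have rBinj: "\<And>x y. x \<in> S \<Longrightarrow> y \<in> S \<Longrightarrow> rotB X x = rotB X y \<Longrightarrow> x = y"
    using td(3) unfolding bij_betw_def inj_on_def S_def by blast
  have wvW: "\<And>x. x \<in> S \<Longrightarrow> wv X (rotW X x) = wv X x" using td(4) S_def by blast
  have bvB: "\<And>x. x \<in> S \<Longrightarrow> bv X (rotB X x) = bv X x" using td(5) S_def by blast
  have pdef: "\<And>x. p x = rotW X (rotB X x)" unfolding p_def facerot_apply ..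
  have Biff: "\<And>f. f \<in> S \<Longrightarrow> bv X f = b \<longleftrightarrow> f = e1 \<or> f = e2"
    using Bset unfolding b_def S_def by blast
  have e2b: "bv X e2 = b" using Biff e2 S_def by blast
  have e1S: "e1 \<in> S" and e2S: "e2 \<in> S" using e1 e2 S_def by auto
  have S'eq: "S' = S - {e1, e2}" using EY S_def S'_def by simp
  have rB1: "rotB X e1 = e2"
  proof -
    have "rotB X e1 \<in> S" "bv X (rotB X e1) = b" using rBS e1S bvB b_def by auto
    then have c: "rotB X e1 = e1 \<or> rotB X e1 = e2" using Biff by blast
    have "rotB X e1 \<noteq> e1"
    proof
      assume h: "rotB X e1 = e1"
      have "bv X e1 = bv X e2" using e2b b_def by simp
      then obtain k where "(rotB X ^^ k) e1 = e2" using td(7)[OF e1 e2] by blast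
      then show False using fix_funpow[of "rotB X" e1 k, OF h] e12 by simp
    qed
    then show ?thesis using c by blast
  qed
  have rB2: "rotB X e2 = e1"
  proof -
    have "rotB X e2 \<in> S" "bv X (rotB X e2) = b" using rBS e2S bvB e2b by auto
    then have c: "rotB X e2 = e1 \<or> rotB X e2 = e2" using Biff by blast
    have "rotB X e2 \<noteq> e2" using rB1 rBinj e1S e2S e12 by metis
    then show ?thesis using c by blast
  qed
  have rBnot: "\<And>y. y \<in> S \<Longrightarrow> y \<noteq> e1 \<Longrightarrow> y \<noteq> e2 \<Longrightarrow> rotB X y \<noteq> e1 \<and> rotB X y \<noteq> e2"
    using rB1 rB2 rBinj e1S e2S by metis
  have LA1: "L A1 \<noteq> 0" and LA2: "L A2 \<noteq> 0"
    using td(8) e1 e2 unfolding L_def A1_def A2_def verts_def whites_def by auto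
  have bB: "b \<in> blacks X" using e1 unfolding b_def blacks_def by auto
  have nb: "nbrsB X b = {A1, A2}"
  proof -
    have "nbrsB X b = wv X ` {f\<in>edges X. bv X f = b}" unfolding nbrsB_def by auto
    also have "\<dots> = {A1, A2}" using Bset unfolding b_def A1_def A2_def by simp
    finally show ?thesis .
  qed
  have "is_circuit {A1, A2} (lab X)" using circ bB nb by metis
  then have "fam_dependent {A1, A2} L" unfolding is_circuit_def L_def by blast
  then obtain lam where lam: "lam \<noteq> 0" "L A2 = lam *s L A1"
    using dep2[of A1 A2 L] A12 LA1 LA2 unfolding A1_def A2_def by blast
  have nzA: "pairing (L b) (L A1) \<noteq> 0" using nz e1 unfolding phiX_def L_def b_def A1_def by blast
  have YlabB: "\<And>f. f \<in> S' \<Longrightarrow> lab Y (bv Y f) = L (bv Y f)"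
    using Yl unfolding verts_def blacks_def S'_def L_def by blast
  have YlabW: "\<And>f. f \<in> S' \<Longrightarrow> lab Y (wv Y f) = L (wv Y f)"
    using Yl unfolding verts_def whites_def S'_def L_def by blast
  have Ybv: "\<And>f. f \<in> S' \<Longrightarrow> bv Y f = bv X f" using Yd S'_def by blast
  have Ywv: "\<And>f. f \<in> S' \<Longrightarrow> wv Y f = (if wv X f = A2 then A1 else wv X f)"
    using Yd S'_def A1_def A2_def by blast
  have YrB: "\<And>f. f \<in> S' \<Longrightarrow> rotB Y f = rotB X f" using Yd S'_def by blast
  have YrW: "\<And>f. f \<in> S' \<Longrightarrow> rotW Y f = first_return (rotW X \<circ> Transposition.transpose e1 e2) S' f"
    using Yd S'_def by blast
  define Q where "Q f z = pairing (L (bv X z)) (L (wv X z)) / pairing (L (bv X f)) (L (wv X z))" for f z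
  have omWX: "\<And>x. omW X x = Q x (p x)"
    unfolding omW_def phiX_def psiX_def L_def p_def Q_def ..
  have omWY: "\<And>f. f \<in> S' \<Longrightarrow> facerot Y f \<in> S' \<Longrightarrow> omW Y f = Q f (facerot Y f)"
  proof -
    fix f assume f: "f \<in> S'" and ff: "facerot Y f \<in> S'"
    define z where "z = facerot Y f"
    have z: "z \<in> S'" using ff z_def by simp
    have "omW Y f = pairing (lab Y (bv Y z)) (lab Y (wv Y z)) / pairing (lab Y (bv Y f)) (lab Y (wv Y z))"
      unfolding omW_def phiX_def psiX_def z_def ..
    also have "\<dots> = pairing (L (bv X z)) (L (wv Y z)) / pairing (L (bv X f)) (L (wv Y z))"
      using YlabB[OF f] YlabB[OF z] YlabW[OF z] Ybv[OF f] Ybv[OF z] by simp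
    also have "\<dots> = Q f z"
    proof (cases "wv X z = A2")
      case True
      then show ?thesis unfolding Q_def using Ywv[OF z] lam ratio_scaleW[of lam _ "L A1"] by simp
    next
      case False
      then show ?thesis unfolding Q_def using Ywv[OF z] by simp
    qed
    finally show "omW Y f = Q f (facerot Y f)" unfolding z_def .
  qed
  show "edges Y \<subseteq> edges X" using EY by blast
  show "\<forall>x\<in>edges X - edges Y. facerot X x \<notin> edges Y \<longrightarrow> omW X x = 1"
  proof (intro ballI impI)
    fix x assume x: "x \<in> edges X - edges Y" and px: "facerot X x \<notin> edges Y"
    have xS: "x \<in> S" and xe: "x = e1 \<or> x = e2" using x EY S_def by auto
    have pxS: "p x \<in> S" using pdef rWS rBS xS by simp
    then have "p x = e1 \<or> p x = e2" using px EY S_def p_def by auto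
    then have bb: "bv X (p x) = bv X x" using xe e2b b_def by auto
    have "omW X x = phiX X (p x) / phiX X (p x)"
      unfolding omW_def psiX_def phiX_def p_def using bb p_def by simp
    then show "omW X x = 1" using nz pxS S_def by simp
  qed
  let ?g = "rotW X \<circ> Transposition.transpose e1 e2"
  have gf: "\<And>f. f \<in> S' \<Longrightarrow> ?g f = rotW X f" using S'eq by auto
  show "\<forall>f\<in>edges Y. facerot Y f \<in> edges Y \<and> (\<exists>k>0. facerot Y f = (facerot X ^^ k) f \<and>
        (\<forall>j. 0 < j \<longrightarrow> j < k \<longrightarrow> (facerot X ^^ j) f \<notin> edges Y) \<and>
        omW Y f = (\<Prod>j<k. omW X ((facerot X ^^ j) f)))"
    unfolding S'_def[symmetric] p_def[symmetric]
  proof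
    fix f assume fS': "f \<in> S'"
    have fS: "f \<in> S" and f1: "f \<noteq> e1" and f2: "f \<noteq> e2" using fS' S'eq by auto
    define y where "y = rotB X f"
    have yS: "y \<in> S" using rBS fS y_def by simp
    have yS': "y \<in> S'" using rBnot[OF fS f1 f2] yS S'eq y_def by simp
    have y1: "y \<noteq> e1" and y2: "y \<noteq> e2" using yS' S'eq by auto
    have fY: "facerot Y f = first_return ?g S' y"
      using YrW[OF yS'] YrB[OF fS'] facerot_apply y_def by metis
    have pf: "p f = rotW X y" using pdef y_def by simp
    consider (a) "rotW X y \<noteq> e1 \<and> rotW X y \<noteq> e2" | (b) "rotW X y = e1" | (c) "rotW X y = e2" by blast
    then show "facerot Y f \<in> S' \<and> (\<exists>k>0. facerot Y f = (p ^^ k) f \<and>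
        (\<forall>j. 0 < j \<longrightarrow> j < k \<longrightarrow> (p ^^ j) f \<notin> S') \<and>
        omW Y f = (\<Prod>j<k. omW X ((p ^^ j) f)))"
    proof cases
      case a
      have pfS': "p f \<in> S'" using pf a rWS[OF yS] S'eq by simp
      have fy: "facerot Y f = p f" using fY fr1[of ?g y S'] gf[OF yS'] pf pfS' by simp
      have om: "omW Y f = omW X f" using omWY[OF fS'] fy pfS' omWX by simp
      show ?thesis using pfS' fy om blk1[of "facerot Y" f p "omW Y" "omW X" S'] by simp
    next
      case b
      have pf1: "p f = e1" using pf b by simp
      have wy: "wv X y = A1" using wvW[OF yS] b A1_def by metis
      define c2 where "c2 = rotW X e2"
      have c2S: "c2 \<in> S" using rWS e2S c2_def by simp
      have wc2: "wv X c2 = A2" using wvW e2S c2_def A2_def by simp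
      have c2ne1: "c2 \<noteq> e1" using wc2 A12 A1_def A2_def by auto
      have pe1: "p e1 = c2" using pdef rB1 c2_def by simp
      show ?thesis
      proof (cases "c2 = e2")
        case False
        have c2S': "c2 \<in> S'" using c2S c2ne1 False S'eq by simp
        have fy: "facerot Y f = c2"
          using fY fr2[of ?g y S'] gf[OF yS'] b c2S' c2_def e1S S'eq by simp
        have "omW Y f = Q f c2" using omWY[OF fS'] fy c2S' by simp
        also have "\<dots> = Q f e1 * Q e1 c2"
          unfolding Q_def using wc2 lam nzA b_def A1_def by (simp add: pairing_scale2)
        also have "\<dots> = omW X f * omW X (p f)" using omWX pf1 pe1 by simp
        finally have om: "omW Y f = omW X f * omW X (p f)" .
        have "p f \<notin> S'" using pf1 S'eq by simp
        then show ?thesis using c2S' fy pf1 pe1 om blk2[of p f S' "facerot Y" "omW Y" "omW X"] by simp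
      next
        case True
        define c1 where "c1 = rotW X e1"
        have c1S: "c1 \<in> S" using rWS e1S c1_def by simp
        have c1ne1: "c1 \<noteq> e1" using rWinj[OF yS e1S] b y1 c1_def by metis
        have wc1: "wv X c1 = A1" using wvW e1S c1_def A1_def by simp
        have c1ne2: "c1 \<noteq> e2" using wc1 A12 A1_def A2_def by auto
        have c1S': "c1 \<in> S'" using c1S c1ne1 c1ne2 S'eq by simp
        have fy: "facerot Y f = c1"
          using fY fr3[of ?g y S'] gf[OF yS'] b c1S' c1_def c2_def True e1S e2S S'eq by simp
        have pe2: "p e2 = c1" using pdef rB2 c1_def by simp
        have "omW Y f = Q f c1" using omWY[OF fS'] fy c1S' by simp
        also have "\<dots> = Q f e1 * Q e1 e2 * Q e2 c1"
          unfolding Q_def using wc1 lam nzA b_def A1_def A2_def e2b by (simp add: pairing_scale2)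
        also have "\<dots> = omW X f * omW X (p f) * omW X (p (p f))" using omWX pf1 pe1 pe2 True by simp
        finally have om: "omW Y f = omW X f * omW X (p f) * omW X (p (p f))" .
        have "p f \<notin> S'" "p (p f) \<notin> S'" using pf1 pe1 True S'eq by simp_all
        then show ?thesis using c1S' fy pf1 pe1 pe2 True om blk3[of p f S' "facerot Y" "omW Y" "omW X"] by simp
      qed
    next
      case c
      have pf2: "p f = e2" using pf c by simp
      define c1 where "c1 = rotW X e1"
      have c1S: "c1 \<in> S" using rWS e1S c1_def by simp
      have wc1: "wv X c1 = A1" using wvW e1S c1_def A1_def by simp
      have c1ne2: "c1 \<noteq> e2" using wc1 A12 A1_def A2_def by auto
      have pe2: "p e2 = c1" using pdef rB2 c1_def by simp
      show ?thesis
      proof (cases "c1 = e1")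
        case False
        have c1S': "c1 \<in> S'" using c1S c1ne2 False S'eq by simp
        have fy: "facerot Y f = c1"
          using fY fr2[of ?g y S'] gf[OF yS'] c c1S' c1_def e2S S'eq by simp
        have "omW Y f = Q f c1" using omWY[OF fS'] fy c1S' by simp
        also have "\<dots> = Q f e2 * Q e2 c1"
          unfolding Q_def using wc1 lam nzA b_def A1_def A2_def e2b by (simp add: pairing_scale2)
        also have "\<dots> = omW X f * omW X (p f)" using omWX pf2 pe2 by simp
        finally have om: "omW Y f = omW X f * omW X (p f)" .
        have "p f \<notin> S'" using pf2 S'eq by simp
        then show ?thesis using c1S' fy pf2 pe2 om blk2[of p f S' "facerot Y" "omW Y" "omW X"] by simp
      next
        case True
        define c2 where "c2 = rotW X e2"
        have c2S: "c2 \<in> S" using rWS e2S c2_def by simp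
        have c2ne2: "c2 \<noteq> e2" using rWinj[OF yS e2S] c y2 c2_def by metis
        have wc2: "wv X c2 = A2" using wvW e2S c2_def A2_def by simp
        have c2ne1: "c2 \<noteq> e1" using wc2 A12 A1_def A2_def by auto
        have c2S': "c2 \<in> S'" using c2S c2ne1 c2ne2 S'eq by simp
        have fy: "facerot Y f = c2"
          using fY fr3[of ?g y S'] gf[OF yS'] c c2S' c1_def c2_def True e1S e2S S'eq by simp
        have pe1: "p e1 = c2" using pdef rB1 c2_def by simp
        have "omW Y f = Q f c2" using omWY[OF fS'] fy c2S' by simp
        also have "\<dots> = Q f e2 * Q e2 e1 * Q e1 c2"
          unfolding Q_def using wc2 lam nzA b_def A1_def A2_def e2b by (simp add: pairing_scale2)
        also have "\<dots> = omW X f * omW X (p f) * omW X (p (p f))" using omWX pf2 pe1 pe2 True by simp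
        finally have om: "omW Y f = omW X f * omW X (p f) * omW X (p (p f))" .
        have "p f \<notin> S'" "p (p f) \<notin> S'" using pf2 pe2 True S'eq by simp_all
        then show ?thesis using c2S' fy pf2 pe1 pe2 True om blk3[of p f S' "facerot Y" "omW Y" "omW X"] by simp
      qed
    qed
  qed
qed




lemma coh_shrink:
  fixes X Y :: "('e,'v,complex ^ 'n) tiling"
  assumes blk: "\<forall>f\<in>edges Y. facerot Y f \<in> edges Y \<and> (\<exists>k>0. facerot Y f = (facerot X ^^ k) f \<and>
        (\<forall>j. 0 < j \<longrightarrow> j < k \<longrightarrow> (facerot X ^^ j) f \<notin> edges Y) \<and>
        wY f = (\<Prod>j<k. wX ((facerot X ^^ j) f)))"
    and sub: "edges Y \<subseteq> edges X"
    and tY: "is_tiling Y"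
    and repX: "\<And>e. e \<in> edges X \<Longrightarrow> face_multiratio X e = oprod (facerot X) wX e"
    and repY: "\<And>e. e \<in> edges Y \<Longrightarrow> face_multiratio Y e = oprod (facerot Y) wY e"
    and cohX: "coherent X"
  shows "coherent Y"
  unfolding coherent_def
proof
  fix e assume e: "e \<in> edges Y"
  have b: "(\<exists>n>0. (facerot X ^^ n) e = e) \<and> oprod (facerot Y) wY e = oprod (facerot X) wX e"
    by (rule block_prod[OF e _ facerot_period[OF tY e]]) (rule blk[rule_format])
  have eX: "e \<in> edges X" using e sub by blast
  show "face_multiratio Y e = 1"
    using b repY[OF e] repX[OF eX] cohX eX unfolding coherent_def by simp
qed

lemma coh_grow:
  fixes X Y :: "('e,'v,complex ^ 'n) tiling"
  assumes blk: "\<forall>f\<in>edges Y. facerot Y f \<in> edges Y \<and> (\<exists>k>0. facerot Y f = (facerot X ^^ k) f \<and>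
        (\<forall>j. 0 < j \<longrightarrow> j < k \<longrightarrow> (facerot X ^^ j) f \<notin> edges Y) \<and>
        wY f = (\<Prod>j<k. wX ((facerot X ^^ j) f)))"
    and sub: "edges Y \<subseteq> edges X"
    and one: "\<forall>x\<in>edges X - edges Y. facerot X x \<notin> edges Y \<longrightarrow> wX x = 1"
    and tX: "is_tiling X" and tY: "is_tiling Y"
    and repX: "\<And>e. e \<in> edges X \<Longrightarrow> face_multiratio X e = oprod (facerot X) wX e"
    and repY: "\<And>e. e \<in> edges Y \<Longrightarrow> face_multiratio Y e = oprod (facerot Y) wY e"
    and cohY: "coherent Y"
  shows "coherent X"
  unfolding coherent_def
proof
  fix e assume e: "e \<in> edges X"
  have per: "\<exists>n>0. (facerot X ^^ n) e = e" by (rule facerot_period[OF tX e])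
  have inX: "(facerot X ^^ i) e \<in> edges X" for i
    by (induction i) (use e facerot_in[OF tX] in auto)
  have "oprod (facerot X) wX e = 1"
  proof (cases "\<exists>k. (facerot X ^^ k) e \<in> edges Y")
    case True
    then obtain k where k: "(facerot X ^^ k) e \<in> edges Y" by blast
    define e0 where "e0 = (facerot X ^^ k) e"
    have e0: "e0 \<in> edges Y" using k e0_def by simp
    have "oprod (facerot X) wX e = oprod (facerot X) wX e0"
      using oprod_shift[OF per, of wX k] e0_def by simp
    also have "\<dots> = oprod (facerot Y) wY e0"
    proof -
      have b: "(\<exists>n>0. (facerot X ^^ n) e0 = e0) \<and> oprod (facerot Y) wY e0 = oprod (facerot X) wX e0"
        by (rule block_prod[OF e0 _ facerot_period[OF tY e0]]) (rule blk[rule_format])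
      then show ?thesis by simp
    qed
    also have "\<dots> = 1" using repY[OF e0] cohY e0 unfolding coherent_def by simp
    finally show ?thesis .
  next
    case False
    have "\<And>i. wX ((facerot X ^^ i) e) = 1"
    proof -
      fix i
      have a: "(facerot X ^^ i) e \<in> edges X - edges Y" using inX False by blast
      have "(facerot X ^^ Suc i) e \<notin> edges Y" using False by blast
      then have "facerot X ((facerot X ^^ i) e) \<notin> edges Y" by simp
      then show "wX ((facerot X ^^ i) e) = 1" using one a by blast
    qed
    then show ?thesis unfolding oprod_def by simp
  qed
  then show "face_multiratio X e = 1" using repX[OF e] by simp
qed

lemma nzp_phi: "nonzero_pairings X \<Longrightarrow> \<forall>e\<in>edges X. phiX X e \<noteq> 0"
  unfolding nonzero_pairings_def phiX_def by simp

lemma nzp_psi: "nonzero_pairings X \<Longrightarrow> \<forall>e\<in>edges X. psiX X e \<noteq> 0"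
  unfolding nonzero_pairings_def psiX_def by simp

lemma coh_nz_all: "is_tiling X \<Longrightarrow> coherent X \<Longrightarrow> \<forall>e\<in>edges X. phiX X e \<noteq> 0"
  by (intro ballI) (rule coherent_nz(1))

lemma M1_case:
  fixes T T' :: "('e, 'v, complex ^ 'n) tiling"
  assumes dT: "double_circuit T" and cT: "coherent T" and m: "move_M1 T T'"
    and dT': "double_circuit T'" and nz': "nonzero_pairings T'"
  shows "coherent T'"
proof -
  have dd: "is_tiling T \<and> (\<forall>v\<in>whites T. is_circuit (nbrsW T v) (lab T)) \<and>
    (\<forall>v\<in>blacks T. is_circuit (nbrsB T v) (lab T))"
    using dT unfolding double_circuit_def .
  note tT = conjunct1[OF dd] and cW = conjunct1[OF conjunct2[OF dd]] and cB = conjunct2[OF conjunct2[OF dd]]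
  have dd': "is_tiling T' \<and> (\<forall>v\<in>whites T'. is_circuit (nbrsW T' v) (lab T')) \<and>
    (\<forall>v\<in>blacks T'. is_circuit (nbrsB T' v) (lab T'))"
    using dT' unfolding double_circuit_def .
  note tT' = conjunct1[OF dd'] and cW' = conjunct1[OF conjunct2[OF dd']] and cB' = conjunct2[OF conjunct2[OF dd']]
  have nzT: "\<forall>e\<in>edges T. phiX T e \<noteq> 0" by (rule coh_nz_all[OF tT cT])
  have nzT': "\<forall>e\<in>edges T'. phiX T' e \<noteq> 0" by (rule nzp_phi[OF nz'])
  have repBT: "\<And>e. e \<in> edges T \<Longrightarrow> face_multiratio T e = oprod (facerot T) (omB T) e"
    by (rule mult_B)
  have repBT': "\<And>e. e \<in> edges T' \<Longrightarrow> face_multiratio T' e = oprod (facerot T') (omB T') e"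
    by (rule mult_B)
  have repWT: "\<And>e. e \<in> edges T \<Longrightarrow> face_multiratio T e = oprod (facerot T) (omW T) e"
    by (rule mult_W[OF facerot_period[OF tT]])
  have repWT': "\<And>e. e \<in> edges T' \<Longrightarrow> face_multiratio T' e = oprod (facerot T') (omW T') e"
    by (rule mult_W[OF facerot_period[OF tT']])
  consider (a) "remove_white T T'" | (b) "remove_white T' T" | (c) "remove_black T T'" | (d) "remove_black T' T"
    using m unfolding move_M1_def by blast
  then show ?thesis
  proof cases
    case a
    note r = rw_block[OF a tT cW nzT]
    show ?thesis by (rule coh_shrink[OF r(2) r(1) tT' repBT repBT' cT])
  next
    case b
    note r = rw_block[OF b tT' cW' nzT']
    show ?thesis by (rule coh_grow[OF r(2) r(1) r(3) tT' tT repBT' repBT cT])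
  next
    case c
    note r = rb_block[OF c tT cB nzT]
    show ?thesis by (rule coh_shrink[OF r(2) r(1) tT' repWT repWT' cT])
  next
    case d
    note r = rb_block[OF d tT' cB' nzT']
    show ?thesis by (rule coh_grow[OF r(2) r(1) r(3) tT' tT repWT' repWT cT])
  qed
qed



lemma pairing_axis: "pairing l (axis i 1) = l $ i"
  unfolding pairing_def axis_def by (simp add: if_distrib cong: if_cong)

lemma hyp_univ: "hyp l = UNIV \<Longrightarrow> l = 0"
proof -
  assume h: "hyp l = UNIV"
  have "\<And>i. l $ i = 0"
  proof -
    fix i
    have "axis i 1 \<in> hyp l" using h by simp
    then show "l $ i = 0" unfolding hyp_def using pairing_axis[of l i] by simp
  qed
  then show "l = 0" by (simp add: vec_eq_iff)
qed

lemma prop4: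
  fixes a bX bY bA b'X b'Y b'A cX cY :: complex
  assumes "a \<noteq> 0" "bX * a = bA * cX" "bY * a = bA * cY" "b'X * a = b'A * cX" "b'Y * a = b'A * cY"
  shows "bX * b'Y = bY * b'X"
proof -
  have "(bX * b'Y) * (a * a) = (bX * a) * (b'Y * a)" by (simp add: algebra_simps)
  also have "\<dots> = (bA * cX) * (b'A * cY)" using assms by simp
  also have "\<dots> = (bY * a) * (b'X * a)" using assms by (simp add: algebra_simps)
  also have "\<dots> = (bY * b'X) * (a * a)" by (simp add: algebra_simps)
  finally show ?thesis using assms(1) by simp
qed

lemma oprod_2cycle:
  assumes "P a = b" "P b = a" "a \<noteq> b"
  shows "oprod P W a = W a * W b"
proof -
  have "plen P a = 2"
    by (rule plen_eqI) (use assms in \<open>auto simp: numeral_2_eq_2 less_Suc_eq\<close>)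
  then show ?thesis unfolding oprod_def using assms by (simp add: numeral_2_eq_2)
qed

lemma M2_core:
  fixes T T' :: "('e, 'v, complex ^ 'n) tiling"
  assumes defs: "eb = rotB T ea" "ec = rotW T eb" "ed = rotB T ec"
    "A = wv T ea" "c = bv T ea" "B = wv T ec" "d = bv T ec"
    "old = {ea, eb, ec, ed}" "new = {kA, kc, kB, kd, q1, q2, q3, q4}"
    "wv' = (wv T)(kA := A, kc := E, kB := B, kd := F, q1 := E, q2 := E, q3 := F, q4 := F)"
    "bv' = (bv T)(kA := g, kc := c, kB := h, kd := d, q1 := g, q2 := h, q3 := h, q4 := g)"
    "rW = (merge2 (merge2 (rotW T) ed ea kA) eb ec kB)
                (kc := q1, q1 := q2, q2 := kc, q4 := kd, kd := q3, q3 := q4)"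
    "rB = (merge2 (merge2 (rotB T) ea eb kc) ec ed kd)
                (kA := q4, q4 := q1, q1 := kA, q2 := q3, q3 := kB, kB := q2)"
  and body: "ea \<in> edges T \<and> rotW T ed = ea \<and> A \<noteq> B \<and> c \<noteq> d \<and>
        card new = 8 \<and> new \<inter> edges T = {} \<and>
        distinct [g, E, h, F] \<and> {g, E, h, F} \<inter> verts T = {} \<and>
        edges T' = (edges T - old) \<union> new \<and>
        (\<forall>f\<in>edges T'. wv T' f = wv' f \<and> bv T' f = bv' f \<and>
                       rotW T' f = rW f \<and> rotB T' f = rB f) \<and>
        (\<forall>v\<in>verts T. lab T' v = lab T v) \<and>
        lab T' E \<noteq> 0 \<and>
        vec.span {lab T' E} = vec.span {lab T A, lab T B} \<inter> vec.span (lab T ` (nbrsB T c - {A, B})) \<and>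
        lab T' F \<noteq> 0 \<and>
        vec.span {lab T' F} = vec.span {lab T A, lab T B} \<inter> vec.span (lab T ` (nbrsB T d - {A, B})) \<and>
        lab T' g \<noteq> 0 \<and>
        hyp (lab T' g) = vec.span ((hyp (lab T c) \<inter> hyp (lab T d)) \<union>
                                    \<Inter> (hyp ` lab T ` (nbrsW T A - {c, d}))) \<and>
        lab T' h \<noteq> 0 \<and>
        hyp (lab T' h) = vec.span ((hyp (lab T c) \<inter> hyp (lab T d)) \<union>
                                    \<Inter> (hyp ` lab T ` (nbrsW T B - {c, d})))"
  and dT: "double_circuit T" and cT: "coherent T"
  and dT': "double_circuit T'" and nz': "nonzero_pairings T'"
  shows "coherent T'"
proof -
  have eaS0:"ea \<in> edges T" using body by simp
  have rWed: "rotW T ed = ea" using body by simp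
  have AB: "A \<noteq> B" using body by simp
  have cd: "c \<noteq> d" using body by simp
  have card8:"card new = 8" using body by simp
  have newdisj: "new \<inter> edges T = {}" using body by simp
  have ET':"edges T' = (edges T - old) \<union> new"
    using body by simp
  have T'd:"\<forall>f\<in>edges T'. wv T' f = wv' f \<and> bv T' f = bv' f \<and> rotW T' f = rW f \<and> rotB T' f = rB f"
    using body by simp
  have labeq:"\<forall>v\<in>verts T. lab T' v = lab T v"
    using body by simp
  have Enz:"lab T' E \<noteq> 0"
    using body by simp
  have Espan:"vec.span {lab T' E} = vec.span {lab T A, lab T B} \<inter> vec.span (lab T ` (nbrsB T c - {A, B}))"
    using body by simp
  have Fnz:"lab T' F \<noteq> 0"
    using body by simp
  have Fspan:"vec.span {lab T' F} = vec.span {lab T A, lab T B} \<inter> vec.span (lab T ` (nbrsB T d - {A, B}))"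
    using body by simp
  have gnz:"lab T' g \<noteq> 0"
    using body by simp
  have ghyp:"hyp (lab T' g) = vec.span ((hyp (lab T c) \<inter> hyp (lab T d)) \<union> \<Inter> (hyp ` lab T ` (nbrsW T A - {c, d})))"
    using body by simp
  have hnz:"lab T' h \<noteq> 0"
    using body by simp
  have hhyp:"hyp (lab T' h) = vec.span ((hyp (lab T c) \<inter> hyp (lab T d)) \<union> \<Inter> (hyp ` lab T ` (nbrsW T B - {c, d})))"
    using body by simp
  have dd: "is_tiling T \<and> (\<forall>v\<in>whites T. is_circuit (nbrsW T v) (lab T)) \<and>
    (\<forall>v\<in>blacks T. is_circuit (nbrsB T v) (lab T))"
    using dT unfolding double_circuit_def .
  note tT = conjunct1[OF dd]
  have dd': "is_tiling T' \<and> (\<forall>v\<in>whites T'. is_circuit (nbrsW T' v) (lab T')) \<and>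
    (\<forall>v\<in>blacks T'. is_circuit (nbrsB T' v) (lab T'))"
    using dT' unfolding double_circuit_def .
  note tT' = conjunct1[OF dd']
  define S where "S = edges T"
  define S' where "S' = edges T'"
  define p where "p = facerot T"
  define p' where "p' = facerot T'"
  define l where "l = lab T'"
  note td = tilingD[OF tT]
  have eaS: "ea \<in> S" using eaS0 S_def by simp
  have rWS: "\<And>x. x \<in> S \<Longrightarrow> rotW T x \<in> S" using td(2) bij_betwE unfolding S_def by blast
  have rBS: "\<And>x. x \<in> S \<Longrightarrow> rotB T x \<in> S" using td(3) bij_betwE unfolding S_def by blast
  have rWinj: "\<And>x y. x \<in> S \<Longrightarrow> y \<in> S \<Longrightarrow> rotW T x = rotW T y \<Longrightarrow> x = y"
    using td(2) unfolding bij_betw_def inj_on_def S_def by blast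
  have rBinj: "\<And>x y. x \<in> S \<Longrightarrow> y \<in> S \<Longrightarrow> rotB T x = rotB T y \<Longrightarrow> x = y"
    using td(3) unfolding bij_betw_def inj_on_def S_def by blast
  have rBsurj: "\<And>y. y \<in> S \<Longrightarrow> \<exists>x\<in>S. rotB T x = y"
  proof -
    fix y assume "y \<in> S"
    then have "y \<in> rotB T ` S" using td(3) unfolding bij_betw_def S_def by simp
    then show "\<exists>x\<in>S. rotB T x = y" by (auto simp: image_iff)
  qed
  have wvW: "\<And>x. x \<in> S \<Longrightarrow> wv T (rotW T x) = wv T x" using td(4) S_def by blast
  have bvB: "\<And>x. x \<in> S \<Longrightarrow> bv T (rotB T x) = bv T x" using td(5) S_def by blast
  have pdef: "\<And>x. p x = rotW T (rotB T x)" unfolding p_def facerot_apply ..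
  have pS: "\<And>x. x \<in> S \<Longrightarrow> p x \<in> S" using pdef rWS rBS by simp
  have pinj: "\<And>x y. x \<in> S \<Longrightarrow> y \<in> S \<Longrightarrow> p x = p y \<Longrightarrow> x = y"
    using pdef rWinj rBinj rBS by metis
  have ebS: "eb \<in> S" using rBS eaS defs(1) by simp
  have ecS: "ec \<in> S" using rWS ebS defs(2) by simp
  have edS: "ed \<in> S" using rBS ecS defs(3) by simp
  have wvB: "wv T eb = B" using wvW[OF ebS] defs(2,6) by simp
  have wvA: "wv T ed = A" using wvW[OF edS] rWed defs(4) by simp
  have bvc: "bv T eb = c" using bvB[OF eaS] defs(1,5) by simp
  have bvd: "bv T ed = d" using bvB[OF ecS] defs(3,7) by simp
  have wvea: "wv T ea = A" and bvea: "bv T ea = c" and wvec: "wv T ec = B" and bvec: "bv T ec = d"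
    using defs by simp_all
  have old_ne: "ea \<noteq> eb" "ea \<noteq> ec" "ea \<noteq> ed" "eb \<noteq> ec" "eb \<noteq> ed" "ec \<noteq> ed"
    "eb \<noteq> ea" "ec \<noteq> ea" "ed \<noteq> ea" "ec \<noteq> eb" "ed \<noteq> eb" "ed \<noteq> ec"
    using AB cd wvB wvA bvc bvd wvea bvea wvec bvec by metis+
  have rBea: "rotB T ea = eb" and rWeb: "rotW T eb = ec" and rBec: "rotB T ec = ed"
    using defs by simp_all
  have pea: "p ea = ec" using pdef rBea rWeb by simp
  have pec: "p ec = ea" using pdef rBec rWed by simp
  have sn: "set [kA, kc, kB, kd, q1, q2, q3, q4] = new" unfolding defs(9) by simp
  have "card (set [kA, kc, kB, kd, q1, q2, q3, q4]) = length [kA, kc, kB, kd, q1, q2, q3, q4]"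
    unfolding sn card8 by simp
  then have dn: "distinct [kA, kc, kB, kd, q1, q2, q3, q4]" by (rule card_distinct)
  have NEWNE: "kA \<noteq> kc" "kA \<noteq> kB" "kA \<noteq> kd" "kA \<noteq> q1" "kA \<noteq> q2" "kA \<noteq> q3" "kA \<noteq> q4" "kc \<noteq> kA" "kc \<noteq> kB" "kc \<noteq> kd" "kc \<noteq> q1" "kc \<noteq> q2" "kc \<noteq> q3" "kc \<noteq> q4" "kB \<noteq> kA" "kB \<noteq> kc" "kB \<noteq> kd" "kB \<noteq> q1" "kB \<noteq> q2" "kB \<noteq> q3" "kB \<noteq> q4" "kd \<noteq> kA" "kd \<noteq> kc" "kd \<noteq> kB" "kd \<noteq> q1" "kd \<noteq> q2" "kd \<noteq> q3" "kd \<noteq> q4" "q1 \<noteq> kA" "q1 \<noteq> kc" "q1 \<noteq> kB" "q1 \<noteq> kd" "q1 \<noteq> q2" "q1 \<noteq> q3" "q1 \<noteq> q4" "q2 \<noteq> kA" "q2 \<noteq> kc" "q2 \<noteq> kB" "q2 \<noteq> kd" "q2 \<noteq> q1" "q2 \<noteq> q3" "q2 \<noteq> q4" "q3 \<noteq> kA" "q3 \<noteq> kc" "q3 \<noteq> kB" "q3 \<noteq> kd" "q3 \<noteq> q1" "q3 \<noteq> q2" "q3 \<noteq> q4" "q4 \<noteq> kA" "q4 \<noteq> kc" "q4 \<noteq> kB" "q4 \<noteq> kd" "q4 \<noteq> q1" "q4 \<noteq> q2" "q4 \<noteq> q3" using dn by auto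
  have NS: "kA \<notin> S" "kc \<notin> S" "kB \<notin> S" "kd \<notin> S" "q1 \<notin> S" "q2 \<notin> S" "q3 \<notin> S" "q4 \<notin> S" using newdisj defs(9) S_def by auto
  have S'eq: "S' = (S - {ea, eb, ec, ed}) \<union> {kA, kc, kB, kd, q1, q2, q3, q4}"
    using ET' defs(8,9) S_def S'_def by simp
  have ghyp': "hyp (l g) = vec.span ((hyp (lab T c) \<inter> hyp (lab T d)) \<union> \<Inter> (hyp ` lab T ` (nbrsW T A - {c, d})))"
    using ghyp l_def by simp
  have hhyp': "hyp (l h) = vec.span ((hyp (lab T c) \<inter> hyp (lab T d)) \<union> \<Inter> (hyp ` lab T ` (nbrsW T B - {c, d})))"
    using hhyp l_def by simp
  have dA: "\<exists>x\<in>S. wv T x = A \<and> bv T x \<noteq> c \<and> bv T x \<noteq> d"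
  proof (rule ccontr)
    assume na: "\<not> (\<exists>x\<in>S. wv T x = A \<and> bv T x \<noteq> c \<and> bv T x \<noteq> d)"
    have e: "nbrsW T A - {c, d} = {}" using na unfolding nbrsW_def S_def by auto
    have "hyp (l g) = UNIV" using ghyp' unfolding e by simp
    then have "l g = 0" by (rule hyp_univ)
    then show False using gnz l_def by simp
  qed
  have dB: "\<exists>x\<in>S. wv T x = B \<and> bv T x \<noteq> c \<and> bv T x \<noteq> d"
  proof (rule ccontr)
    assume na: "\<not> (\<exists>x\<in>S. wv T x = B \<and> bv T x \<noteq> c \<and> bv T x \<noteq> d)"
    have e: "nbrsW T B - {c, d} = {}" using na unfolding nbrsW_def S_def by auto
    have "hyp (l h) = UNIV" using hhyp' unfolding e by simp
    then have "l h = 0" by (rule hyp_univ)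
    then show False using hnz l_def by simp
  qed
  have dc: "\<exists>x\<in>S. bv T x = c \<and> wv T x \<noteq> A \<and> wv T x \<noteq> B"
  proof (rule ccontr)
    assume na: "\<not> (\<exists>x\<in>S. bv T x = c \<and> wv T x \<noteq> A \<and> wv T x \<noteq> B)"
    have e: "nbrsB T c - {A, B} = {}" using na unfolding nbrsB_def S_def by auto
    have "vec.span {lab T' E} \<subseteq> {0}" using Espan unfolding e by simp
    moreover have "lab T' E \<in> vec.span {lab T' E}" by (simp add: vec.span_base)
    ultimately show False using Enz by auto
  qed
  have dd0: "\<exists>x\<in>S. bv T x = d \<and> wv T x \<noteq> A \<and> wv T x \<noteq> B"
  proof (rule ccontr)
    assume na: "\<not> (\<exists>x\<in>S. bv T x = d \<and> wv T x \<noteq> A \<and> wv T x \<noteq> B)"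
    have e: "nbrsB T d - {A, B} = {}" using na unfolding nbrsB_def S_def by auto
    have "vec.span {lab T' F} \<subseteq> {0}" using Fspan unfolding e by simp
    moreover have "lab T' F \<in> vec.span {lab T' F}" by (simp add: vec.span_base)
    ultimately show False using Fnz by auto
  qed
  have orbW: "\<And>x y. x \<in> S \<Longrightarrow> y \<in> S \<Longrightarrow> wv T x = wv T y \<Longrightarrow> \<exists>k. (rotW T ^^ k) x = y"
    using td(6) S_def by blast
  have orbB: "\<And>x y. x \<in> S \<Longrightarrow> y \<in> S \<Longrightarrow> bv T x = bv T y \<Longrightarrow> \<exists>k. (rotB T ^^ k) x = y"
    using td(7) S_def by blast
  have n1: "rotW T ea \<noteq> ed"
  proof
    assume h: "rotW T ea = ed"
    obtain x where x: "x \<in> S" "wv T x = A" "bv T x \<noteq> c" "bv T x \<noteq> d" using dA by blast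
    obtain k where "(rotW T ^^ k) ea = x" using orbW[OF eaS x(1)] x(2) wvea by metis
    then have "x \<in> {ea, ed}" using two_cycle_funpow[of "rotW T" ea ed k, OF h rWed] by simp
    then show False using x bvea bvd by auto
  qed
  have n2: "rotW T ec \<noteq> eb"
  proof
    assume h: "rotW T ec = eb"
    obtain x where x: "x \<in> S" "wv T x = B" "bv T x \<noteq> c" "bv T x \<noteq> d" using dB by blast
    obtain k where "(rotW T ^^ k) eb = x" using orbW[OF ebS x(1)] x(2) wvB by metis
    then have "x \<in> {eb, ec}" using two_cycle_funpow[of "rotW T" eb ec k, OF rWeb h] by simp
    then show False using x bvc bvec by auto
  qed
  have n3: "rotB T eb \<noteq> ea"
  proof
    assume h: "rotB T eb = ea"
    obtain x where x: "x \<in> S" "bv T x = c" "wv T x \<noteq> A" "wv T x \<noteq> B" using dc by blast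
    obtain k where "(rotB T ^^ k) ea = x" using orbB[OF eaS x(1)] x(2) bvea by metis
    then have "x \<in> {ea, eb}" using two_cycle_funpow[of "rotB T" ea eb k, OF rBea h] by simp
    then show False using x wvea wvB by auto
  qed
  have n4: "rotB T ed \<noteq> ec"
  proof
    assume h: "rotB T ed = ec"
    obtain x where x: "x \<in> S" "bv T x = d" "wv T x \<noteq> A" "wv T x \<noteq> B" using dd0 by blast
    obtain k where "(rotB T ^^ k) ec = x" using orbB[OF ecS x(1)] x(2) bvec by metis
    then have "x \<in> {ec, ed}" using two_cycle_funpow[of "rotB T" ec ed k, OF rBec h] by simp
    then show False using x wvec wvA by auto
  qed
  define \<alpha> where "\<alpha> = rotW T ea"
  define \<beta> where "\<beta> = rotW T ec"
  define \<gamma> where "\<gamma> = rotB T eb"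
  define \<delta> where "\<delta> = rotB T ed"
  have \<alpha>S: "\<alpha> \<in> S" and \<beta>S: "\<beta> \<in> S" and \<gamma>S: "\<gamma> \<in> S" and \<delta>S: "\<delta> \<in> S"
    using rWS rBS eaS ebS ecS edS \<alpha>_def \<beta>_def \<gamma>_def \<delta>_def by auto
  have wv\<alpha>: "wv T \<alpha> = A" using wvW[OF eaS] \<alpha>_def wvea by simp
  have wv\<beta>: "wv T \<beta> = B" using wvW[OF ecS] \<beta>_def wvec by simp
  have bv\<gamma>: "bv T \<gamma> = c" using bvB[OF ebS] \<gamma>_def bvc by simp
  have bv\<delta>: "bv T \<delta> = d" using bvB[OF edS] \<delta>_def bvd by simp
  have \<alpha>ea: "\<alpha> \<noteq> ea"
  proof
    assume h: "\<alpha> = ea"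
    obtain k where "(rotW T ^^ k) ea = ed" using orbW[OF eaS edS] wvea wvA by metis
    then show False using fix_funpow[of "rotW T" ea k] h \<alpha>_def old_ne by simp
  qed
  have \<beta>ec: "\<beta> \<noteq> ec"
  proof
    assume h: "\<beta> = ec"
    obtain k where "(rotW T ^^ k) ec = eb" using orbW[OF ecS ebS] wvec wvB by metis
    then show False using fix_funpow[of "rotW T" ec k] h \<beta>_def old_ne by simp
  qed
  have \<gamma>eb: "\<gamma> \<noteq> eb" using rBinj[OF eaS ebS] rBea \<gamma>_def old_ne by metis
  have \<delta>ed: "\<delta> \<noteq> ed" using rBinj[OF ecS edS] rBec \<delta>_def old_ne by metis
  have \<alpha>ne: "\<alpha> \<noteq> ea" "\<alpha> \<noteq> eb" "\<alpha> \<noteq> ec" "\<alpha> \<noteq> ed"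
    using \<alpha>ea wv\<alpha> wvB wvec AB n1 \<alpha>_def by auto
  have \<beta>ne: "\<beta> \<noteq> ea" "\<beta> \<noteq> eb" "\<beta> \<noteq> ec" "\<beta> \<noteq> ed"
    using \<beta>ec wv\<beta> wvea wvA AB n2 \<beta>_def by auto
  have \<gamma>ne: "\<gamma> \<noteq> ea" "\<gamma> \<noteq> eb" "\<gamma> \<noteq> ec" "\<gamma> \<noteq> ed"
    using \<gamma>eb bv\<gamma> bvec bvd cd n3 \<gamma>_def by auto
  have \<delta>ne: "\<delta> \<noteq> ea" "\<delta> \<noteq> eb" "\<delta> \<noteq> ec" "\<delta> \<noteq> ed"
    using \<delta>ed bv\<delta> bvea bvc cd n4 \<delta>_def by auto
  obtain \<epsilon> where \<epsilon>S: "\<epsilon> \<in> S" and rB\<epsilon>: "rotB T \<epsilon> = ea" using rBsurj[OF eaS] by blast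
  obtain \<zeta> where \<zeta>S: "\<zeta> \<in> S" and rB\<zeta>: "rotB T \<zeta> = ec" using rBsurj[OF ecS] by blast
  have bv\<epsilon>: "bv T \<epsilon> = c" using bvB[OF \<epsilon>S] rB\<epsilon> bvea by simp
  have bv\<zeta>: "bv T \<zeta> = d" using bvB[OF \<zeta>S] rB\<zeta> bvec by simp
  have \<epsilon>ne: "\<epsilon> \<noteq> ea" "\<epsilon> \<noteq> eb" "\<epsilon> \<noteq> ec" "\<epsilon> \<noteq> ed"
    using rB\<epsilon> rBea old_ne \<gamma>ne \<gamma>_def bv\<epsilon> bvec bvd cd by auto
  have \<zeta>ne: "\<zeta> \<noteq> ea" "\<zeta> \<noteq> eb" "\<zeta> \<noteq> ec" "\<zeta> \<noteq> ed"
    using rB\<zeta> rBec old_ne \<delta>ne \<delta>_def bv\<zeta> bvea bvc cd by auto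
  have \<epsilon>\<zeta>: "\<epsilon> \<noteq> \<zeta>" using rB\<epsilon> rB\<zeta> old_ne by auto
  have p\<epsilon>: "p \<epsilon> = \<alpha>" using pdef rB\<epsilon> \<alpha>_def by simp
  have p\<zeta>: "p \<zeta> = \<beta>" using pdef rB\<zeta> \<beta>_def by simp
  have peb: "p eb = rotW T \<gamma>" using pdef \<gamma>_def by simp
  have ped: "p ed = rotW T \<delta>" using pdef \<delta>_def by simp
  have AvT: "A \<in> verts T" "B \<in> verts T" "c \<in> verts T" "d \<in> verts T"
    using eaS ecS unfolding verts_def whites_def blacks_def S_def wvea[symmetric] wvec[symmetric] bvea[symmetric] bvec[symmetric]
    by auto
  have labS: "\<And>x. x \<in> S \<Longrightarrow> lab T (bv T x) = l (bv T x) \<and> lab T (wv T x) = l (wv T x)"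
    using labeq unfolding l_def verts_def whites_def blacks_def S_def by auto
  have lA: "lab T A = l A" and lB: "lab T B = l B" and lc: "lab T c = l c" and ld: "lab T d = l d"
    using labeq AvT unfolding l_def by auto
  define PP where "PP b X = pairing (l b) (l X)" for b X
  have nzT: "\<And>x. x \<in> S \<Longrightarrow> phiX T x \<noteq> 0 \<and> psiX T x \<noteq> 0"
    using coherent_nz[OF tT cT] S_def by blast
  have omBT: "\<And>x. x \<in> S \<Longrightarrow> omB T x = PP (bv T x) (wv T x) / PP (bv T x) (wv T (p x))"
    using labS pS unfolding omB_def phiX_def psiX_def PP_def p_def by simp
  have phT: "\<And>x. x \<in> S \<Longrightarrow> phiX T x = PP (bv T x) (wv T x)"
    using labS unfolding phiX_def PP_def by simp
  have psT: "\<And>x. x \<in> S \<Longrightarrow> psiX T x = PP (bv T x) (wv T (p x))"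
    using labS pS unfolding psiX_def PP_def p_def by simp
  have cA0: "PP c A \<noteq> 0" using nzT[OF eaS] phT[OF eaS] wvea bvea by simp
  have cB0: "PP c B \<noteq> 0" using nzT[OF eaS] psT[OF eaS] pea wvec bvea by simp
  have dB0: "PP d B \<noteq> 0" using nzT[OF ecS] phT[OF ecS] wvec bvec by simp
  have dA0: "PP d A \<noteq> 0" using nzT[OF ecS] psT[OF ecS] pec wvea bvec by simp
  have sq: "PP c A * PP d B = PP c B * PP d A"
  proof -
    have "face_multiratio T ea = 1" using cT eaS0 unfolding coherent_def by blast
    then have "oprod p (omB T) ea = 1" unfolding mult_B p_def .
    moreover have "oprod p (omB T) ea = omB T ea * omB T ec"
      by (rule oprod_2cycle) (use pea pec old_ne in auto)
    ultimately have "omB T ea * omB T ec = 1" by simp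
    then have "(PP c A / PP c B) * (PP d B / PP d A) = 1"
      using omBT[OF eaS] omBT[OF ecS] pea pec wvea wvec bvea bvec by simp
    then show ?thesis using cB0 dA0 by (simp add: field_simps)
  qed
  define w where "w = PP c B *s l A - PP c A *s l B"
  have pw: "\<And>b. pairing (l b) w = PP c B * PP b A - PP c A * PP b B"
    unfolding w_def PP_def by (simp add: pairing_diff2 pairing_scale2)
  have wcd: "w \<in> hyp (lab T c) \<inter> hyp (lab T d)"
    unfolding hyp_def lc ld using pw[of c] pw[of d] sq by (simp add: algebra_simps)
  have "w \<in> vec.span ((hyp (lab T c) \<inter> hyp (lab T d)) \<union> \<Inter> (hyp ` lab T ` (nbrsW T A - {c, d})))"
    by (rule vec.span_base) (rule UnI1[OF wcd])
  then have wg: "w \<in> hyp (l g)" using ghyp' by simp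
  have "w \<in> vec.span ((hyp (lab T c) \<inter> hyp (lab T d)) \<union> \<Inter> (hyp ` lab T ` (nbrsW T B - {c, d})))"
    by (rule vec.span_base) (rule UnI1[OF wcd])
  then have wh: "w \<in> hyp (l h)" using hhyp' by simp
  have baseB: "\<And>b. b \<in> {c, d, g, h} \<Longrightarrow> PP b B * PP c A = PP b A * PP c B"
  proof -
    fix b assume b: "b \<in> {c, d, g, h}"
    have "pairing (l b) w = 0"
    proof -
      consider "b = c" | "b = d" | "b = g" | "b = h" using b by blast
      then show ?thesis
      proof cases
        case 1 then show ?thesis using wcd lc unfolding hyp_def by simp
      next
        case 2 then show ?thesis using wcd ld unfolding hyp_def by simp
      next
        case 3 then show ?thesis using wg unfolding hyp_def by simp
      next
        case 4 then show ?thesis using wh unfolding hyp_def by simp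
      qed
    qed
    then show "PP b B * PP c A = PP b A * PP c B" using pw[of b] by (simp add: algebra_simps)
  qed
  have decomp: "\<And>X. l X \<in> vec.span {l A, l B} \<Longrightarrow> \<exists>s t. l X = s *s l A + t *s l B"
  proof -
    fix X assume "l X \<in> vec.span {l A, l B}"
    then obtain s where "l X - s *s l A \<in> vec.span {l B}" using vec.span_breakdown_eq by blast
    then obtain t where "l X - s *s l A = t *s l B" using vec.span_singleton by blast
    then have "l X = s *s l A + t *s l B" by (simp add: algebra_simps)
    then show "\<exists>s t. l X = s *s l A + t *s l B" by blast
  qed
  have Espan2: "l E \<in> vec.span {l A, l B}"
    using Espan vec.span_base[of "lab T' E" "{lab T' E}"] lA lB l_def by auto
  have Fspan2: "l F \<in> vec.span {l A, l B}"
    using Fspan vec.span_base[of "lab T' F" "{lab T' F}"] lA lB l_def by auto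
  have baseX: "\<And>b X. b \<in> {c, d, g, h} \<Longrightarrow> l X \<in> vec.span {l A, l B} \<Longrightarrow> PP b X * PP c A = PP b A * PP c X"
  proof -
    fix b X assume b: "b \<in> {c, d, g, h}" and X: "l X \<in> vec.span {l A, l B}"
    obtain s t where st: "l X = s *s l A + t *s l B" using decomp[OF X] by blast
    have e1: "PP b X = s * PP b A + t * PP b B" unfolding PP_def st by (simp add: pairing_add2 pairing_scale2)
    have e2: "PP c X = s * PP c A + t * PP c B" unfolding PP_def st by (simp add: pairing_add2 pairing_scale2)
    show "PP b X * PP c A = PP b A * PP c X" unfolding e1 e2 using baseB[OF b]
      by (simp add: algebra_simps)
  qed
  have I1: "PP g E * PP c A = PP g A * PP c E" using baseX[OF _ Espan2] by simp
  have I2: "PP h F * PP d B = PP h B * PP d F"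
    by (rule prop4[OF cA0]) (use baseX[OF _ Fspan2] baseB in auto)
  have I3: "PP g A * PP d F = PP g F * PP d A"
    by (rule prop4[OF cA0]) (use baseX[OF _ Fspan2] baseB in auto)
  have I4: "PP h B * PP c E = PP h E * PP c B"
    by (rule prop4[OF cA0]) (use baseX[OF _ Espan2] baseB in auto)
  have I5: "PP h E * PP g F = PP h F * PP g E"
    by (rule prop4[OF cA0]) (use baseX[OF _ Espan2] baseX[OF _ Fspan2] in auto)
  have notnew: "\<And>x. x \<in> S \<Longrightarrow> x \<noteq> kA \<and> kA \<noteq> x \<and> x \<noteq> kc \<and> kc \<noteq> x \<and> x \<noteq> kB \<and> kB \<noteq> x \<and> x \<noteq> kd \<and> kd \<noteq> x \<and> x \<noteq> q1 \<and> q1 \<noteq> x \<and> x \<noteq> q2 \<and> q2 \<noteq> x \<and> x \<noteq> q3 \<and> q3 \<noteq> x \<and> x \<noteq> q4 \<and> q4 \<noteq> x" using NS by blast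
  note nn_ea = notnew[OF eaS] and nn_eb = notnew[OF ebS] and nn_ec = notnew[OF ecS] and nn_ed = notnew[OF edS]
  note nn_al = notnew[OF \<alpha>S] and nn_be = notnew[OF \<beta>S] and nn_ga = notnew[OF \<gamma>S] and nn_de = notnew[OF \<delta>S]
  note nn_ep = notnew[OF \<epsilon>S] and nn_ze = notnew[OF \<zeta>S]
  have T'x: "\<And>x. x \<in> S' \<Longrightarrow> wv T' x = wv' x \<and> bv T' x = bv' x \<and> rotW T' x = rW x \<and> rotB T' x = rB x"
    using T'd S'_def by blast
  have inS': "\<And>x. x \<in> S \<Longrightarrow> x \<noteq> ea \<Longrightarrow> x \<noteq> eb \<Longrightarrow> x \<noteq> ec \<Longrightarrow> x \<noteq> ed \<Longrightarrow> x \<in> S'"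
    using S'eq by blast
  have newS': "kA \<in> S'" "kc \<in> S'" "kB \<in> S'" "kd \<in> S'" "q1 \<in> S'" "q2 \<in> S'" "q3 \<in> S'" "q4 \<in> S'"
    using S'eq by auto
  have S'cases: "\<And>x. x \<in> S' \<Longrightarrow> (x \<in> S \<and> x \<noteq> ea \<and> x \<noteq> eb \<and> x \<noteq> ec \<and> x \<noteq> ed) \<or> x = kA \<or> x = kc \<or> x = kB \<or> x = kd \<or> x = q1 \<or> x = q2 \<or> x = q3 \<or> x = q4"
    using S'eq by blast
  have wv'S: "\<And>x. x \<in> S \<Longrightarrow> wv' x = wv T x" using notnew unfolding defs(10) by simp
  have bv'S: "\<And>x. x \<in> S \<Longrightarrow> bv' x = bv T x" using notnew unfolding defs(11) by simp
  have wv'n: "wv' kA = A" "wv' kc = E" "wv' kB = B" "wv' kd = F" "wv' q1 = E" "wv' q2 = E" "wv' q3 = F" "wv' q4 = F"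
    unfolding defs(10) using NEWNE by simp_all
  have bv'n: "bv' kA = g" "bv' kc = c" "bv' kB = h" "bv' kd = d" "bv' q1 = g" "bv' q2 = h" "bv' q3 = h" "bv' q4 = g"
    unfolding defs(11) using NEWNE by simp_all
  have rBonS: "\<And>x. x \<in> S \<Longrightarrow> rB x = (if rotB T x = ea then kc else if rotB T x = ec then kd else rotB T x)"
    unfolding defs(13) merge2_def using notnew nn_ec NEWNE by simp
  have rWonS: "\<And>y. y \<in> S \<Longrightarrow> rW y = (if rotW T y = ed then kA else if rotW T y = eb then kB else rotW T y)"
    unfolding defs(12) merge2_def using notnew nn_eb NEWNE by simp
  have rBn: "rB kA = q4" "rB q4 = q1" "rB q1 = kA" "rB q2 = q3" "rB q3 = kB" "rB kB = q2"
    unfolding defs(13) using NEWNE by simp_all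
  have rWn: "rW kc = q1" "rW q1 = q2" "rW q2 = kc" "rW q4 = kd" "rW kd = q3" "rW q3 = q4"
    unfolding defs(12) using NEWNE by simp_all
  have rBkc: "rB kc = \<gamma>"
    unfolding defs(13) merge2_def using NEWNE nn_eb nn_ec nn_ed n3 \<gamma>ne \<gamma>_def by simp
  have rBkd: "rB kd = \<delta>"
    unfolding defs(13) merge2_def using NEWNE nn_ea nn_ec nn_ed \<delta>ne \<delta>_def by simp
  have rWkA: "rW kA = \<alpha>"
    unfolding defs(12) merge2_def using NEWNE nn_ea nn_eb nn_ed n1 \<alpha>ne \<alpha>_def by simp
  have rWkB: "rW kB = \<beta>"
    unfolding defs(12) merge2_def using NEWNE nn_eb nn_ec nn_ed n2 \<beta>ne \<beta>_def by simp
  have p'def: "\<And>x. x \<in> S' \<Longrightarrow> rB x \<in> S' \<Longrightarrow> p' x = rW (rB x)"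
    unfolding p'_def facerot_apply using T'x by simp
  have \<gamma>S': "\<gamma> \<in> S'" and \<delta>S': "\<delta> \<in> S'" and \<alpha>S': "\<alpha> \<in> S'" and \<beta>S': "\<beta> \<in> S'"
    and \<epsilon>S': "\<epsilon> \<in> S'" and \<zeta>S': "\<zeta> \<in> S'"
    using inS' \<gamma>S \<delta>S \<alpha>S \<beta>S \<epsilon>S \<zeta>S \<gamma>ne \<delta>ne \<alpha>ne \<beta>ne \<epsilon>ne \<zeta>ne by auto
  have p'kA: "p' kA = kd" using p'def[OF newS'(1)] rBn newS' rWn by simp
  have p'kB: "p' kB = kc" using p'def[OF newS'(3)] rBn newS' rWn by simp
  have p'q1: "p' q1 = \<alpha>" using p'def[OF newS'(5)] rBn newS' rWkA by simp
  have p'q3: "p' q3 = \<beta>" using p'def[OF newS'(7)] rBn newS' rWkB by simp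
  have p'q2: "p' q2 = q4" using p'def[OF newS'(6)] rBn newS' rWn by simp
  have p'q4: "p' q4 = q2" using p'def[OF newS'(8)] rBn newS' rWn by simp
  have p'\<epsilon>: "p' \<epsilon> = q1" using p'def[OF \<epsilon>S'] rBonS[OF \<epsilon>S] rB\<epsilon> newS' rWn by simp
  have p'\<zeta>: "p' \<zeta> = q3" using p'def[OF \<zeta>S'] rBonS[OF \<zeta>S] rB\<zeta> old_ne newS' rWn by simp
  have p'kc: "p' kc = (if p eb = ed then kA else if p eb = eb then kB else p eb)"
    using p'def[OF newS'(2)] rBkc \<gamma>S' rWonS[OF \<gamma>S] peb by simp
  have p'kd: "p' kd = (if p ed = ed then kA else if p ed = eb then kB else p ed)"
    using p'def[OF newS'(4)] rBkd \<delta>S' rWonS[OF \<delta>S] ped by simp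
  have p'S0: "\<And>x. x \<in> S \<Longrightarrow> x \<noteq> ea \<Longrightarrow> x \<noteq> eb \<Longrightarrow> x \<noteq> ec \<Longrightarrow> x \<noteq> ed \<Longrightarrow> x \<noteq> \<epsilon> \<Longrightarrow> x \<noteq> \<zeta> \<Longrightarrow>
      p' x = (if p x = ed then kA else if p x = eb then kB else p x)"
  proof -
    fix x assume xS: "x \<in> S" and x: "x \<noteq> ea" "x \<noteq> eb" "x \<noteq> ec" "x \<noteq> ed" "x \<noteq> \<epsilon>" "x \<noteq> \<zeta>"
    define y where "y = rotB T x"
    have yS: "y \<in> S" using rBS xS y_def by simp
    have y1: "y \<noteq> ea" using rBinj[OF xS \<epsilon>S] rB\<epsilon> x(5) y_def by metis
    have y3: "y \<noteq> ec" using rBinj[OF xS \<zeta>S] rB\<zeta> x(6) y_def by metis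
    have y2: "y \<noteq> eb" using rBinj[OF xS eaS] rBea x(1) y_def by metis
    have y4: "y \<noteq> ed" using rBinj[OF xS ecS] rBec x(3) y_def by metis
    have rBx: "rB x = y" using rBonS[OF xS] y1 y3 y_def by simp
    have yS': "y \<in> S'" using inS'[OF yS y1 y2 y3 y4] .
    have xS': "x \<in> S'" using inS'[OF xS x(1-4)] .
    show "p' x = (if p x = ed then kA else if p x = eb then kB else p x)"
      using p'def[OF xS'] rBx yS' rWonS[OF yS] pdef y_def by simp
  qed
  have phT': "\<And>x. x \<in> S' \<Longrightarrow> phiX T' x = PP (bv' x) (wv' x)"
    using T'x unfolding phiX_def PP_def l_def by simp
  have psT': "\<And>x. x \<in> S' \<Longrightarrow> psiX T' x = PP (bv' x) (wv' (p' x))"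
    using T'x facerot_in[OF tT'] unfolding psiX_def PP_def l_def p'_def S'_def by simp
  have nzT': "\<And>x. x \<in> S' \<Longrightarrow> phiX T' x \<noteq> 0 \<and> psiX T' x \<noteq> 0"
    using nz' unfolding nonzero_pairings_def phiX_def psiX_def S'_def by blast
  have cE0: "PP c E \<noteq> 0" using nzT'[OF newS'(2)] phT'[OF newS'(2)] wv'n bv'n by simp
  have gA0: "PP g A \<noteq> 0" using nzT'[OF newS'(1)] phT'[OF newS'(1)] wv'n bv'n by simp
  have gF0: "PP g F \<noteq> 0" using nzT'[OF newS'(1)] psT'[OF newS'(1)] p'kA wv'n bv'n by simp
  have hB0: "PP h B \<noteq> 0" using nzT'[OF newS'(3)] phT'[OF newS'(3)] wv'n bv'n by simp
  have hE0: "PP h E \<noteq> 0" using nzT'[OF newS'(3)] psT'[OF newS'(3)] p'kB wv'n bv'n by simp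
  have dF0: "PP d F \<noteq> 0" using nzT'[OF newS'(4)] phT'[OF newS'(4)] wv'n bv'n by simp
  have gE0: "PP g E \<noteq> 0" using nzT'[OF newS'(5)] phT'[OF newS'(5)] wv'n bv'n by simp
  have hF0: "PP h F \<noteq> 0" using nzT'[OF newS'(7)] phT'[OF newS'(7)] wv'n bv'n by simp
  \<comment> \<open>the common refinement\<close>
  define P where "P x = (if x = eb then kB else if x = ed then kA else if x = kB then kc
     else if x = kc then p eb else if x = kA then kd else if x = kd then p ed
     else if x = q1 then \<alpha> else if x = q3 then \<beta> else if x = q2 then q4 else if x = q4 then q2
     else if x = \<epsilon> then q1 else if x = \<zeta> then q3 else p x)" for x
  define bl where "bl x = (if x \<in> S then bv T x else bv' x)" for x
  define wh where "wh x = (if x \<in> S then wv T x else wv' x)" for x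
  define W where "W x = PP (bl x) (wh x) / PP (bl x) (wh (P x))" for x
  have whn: "wh kA = A" "wh kc = E" "wh kB = B" "wh kd = F" "wh q1 = E" "wh q2 = E" "wh q3 = F" "wh q4 = F"
    unfolding wh_def using NS wv'n by simp_all
  have bln: "bl kA = g" "bl kc = c" "bl kB = h" "bl kd = d" "bl q1 = g" "bl q2 = h" "bl q3 = h" "bl q4 = g"
    unfolding bl_def using NS bv'n by simp_all
  have whS: "\<And>x. x \<in> S \<Longrightarrow> wh x = wv T x" unfolding wh_def by simp
  have blS: "\<And>x. x \<in> S \<Longrightarrow> bl x = bv T x" unfolding bl_def by simp
  have whS': "\<And>x. x \<in> S' \<Longrightarrow> wh x = wv' x" unfolding wh_def using wv'S by auto
  have blS': "\<And>x. x \<in> S' \<Longrightarrow> bl x = bv' x" unfolding bl_def using bv'S by auto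
  have Pn: "P eb = kB" "P ed = kA" "P kB = kc" "P kc = p eb" "P kA = kd" "P kd = p ed"
    "P q1 = \<alpha>" "P q3 = \<beta>" "P q2 = q4" "P q4 = q2" "P \<epsilon> = q1" "P \<zeta> = q3"
    unfolding P_def using NEWNE nn_eb nn_ed nn_ep nn_ze old_ne \<epsilon>ne \<zeta>ne \<epsilon>\<zeta> by simp_all
  have Pother: "\<And>x. x \<in> S \<Longrightarrow> x \<noteq> eb \<Longrightarrow> x \<noteq> ed \<Longrightarrow> x \<noteq> \<epsilon> \<Longrightarrow> x \<noteq> \<zeta> \<Longrightarrow> P x = p x"
    unfolding P_def using notnew by simp
  have Web: "W eb = 1" unfolding W_def using Pn whn blS[OF ebS] whS[OF ebS] bvc wvB cB0 by simp
  have Wed: "W ed = 1" unfolding W_def using Pn whn blS[OF edS] whS[OF edS] bvd wvA dA0 by simp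
  have omBT': "\<And>x. x \<in> S' \<Longrightarrow> p' x \<in> S' \<Longrightarrow> omB T' x = PP (bl x) (wh x) / PP (bl x) (wh (p' x))"
    using T'x blS' whS' unfolding omB_def phiX_def psiX_def PP_def l_def p'_def by simp
  have Wform: "\<And>x. W x = PP (bl x) (wh x) / PP (bl x) (wh (P x))" unfolding W_def ..
  have blkT: "\<And>f. f \<in> S \<Longrightarrow> p f \<in> S \<and> (\<exists>k>0. p f = (P ^^ k) f \<and>
      (\<forall>j. 0 < j \<longrightarrow> j < k \<longrightarrow> (P ^^ j) f \<notin> S) \<and> omB T f = (\<Prod>j<k. W ((P ^^ j) f)))"
  proof -
    fix f assume fS: "f \<in> S"
    have pfS: "p f \<in> S" using pS[OF fS] .
    have "\<exists>k>0. p f = (P ^^ k) f \<and> (\<forall>j. 0 < j \<longrightarrow> j < k \<longrightarrow> (P ^^ j) f \<notin> S) \<and> omB T f = (\<Prod>j<k. W ((P ^^ j) f))"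
    proof -
      consider "f = eb" | "f = ed" | "f = \<epsilon>" | "f = \<zeta>" | "f \<noteq> eb \<and> f \<noteq> ed \<and> f \<noteq> \<epsilon> \<and> f \<noteq> \<zeta>" by blast
      then show ?thesis
      proof cases
        case 1
        have om: "omB T eb = W eb * W (P eb) * W (P (P eb))"
        proof -
          have o1: "omB T eb = PP c B / PP c (wv T (p eb))" using omBT[OF ebS] bvc wvB by simp
          have w1: "W (P eb) = PP h B / PP h E" unfolding Wform using Pn whn bln by simp
          have w2: "W (P (P eb)) = PP c E / PP c (wv T (p eb))"
            unfolding Wform using Pn whn bln whS[OF pS[OF ebS]] by simp
          have nX: "PP c (wv T (p eb)) \<noteq> 0" using nzT[OF ebS] psT[OF ebS] bvc by simp
          show ?thesis unfolding o1 w1 w2 Web using I4 hE0 nX by (simp add: field_simps)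
        qed
        show ?thesis unfolding 1 by (rule blk3) (use Pn NS om in auto)
      next
        case 2
        have om: "omB T ed = W ed * W (P ed) * W (P (P ed))"
        proof -
          have o1: "omB T ed = PP d A / PP d (wv T (p ed))" using omBT[OF edS] bvd wvA by simp
          have w1: "W (P ed) = PP g A / PP g F" unfolding Wform using Pn whn bln by simp
          have w2: "W (P (P ed)) = PP d F / PP d (wv T (p ed))"
            unfolding Wform using Pn whn bln whS[OF pS[OF edS]] by simp
          have nX: "PP d (wv T (p ed)) \<noteq> 0" using nzT[OF edS] psT[OF edS] bvd by simp
          show ?thesis unfolding o1 w1 w2 Wed using I3 gF0 nX by (simp add: field_simps)
        qed
        show ?thesis unfolding 2 by (rule blk3) (use Pn NS om in auto)
      next
        case 3
        have om: "omB T \<epsilon> = W \<epsilon> * W (P \<epsilon>)"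
        proof -
          have o1: "omB T \<epsilon> = PP c (wv T \<epsilon>) / PP c A" using omBT[OF \<epsilon>S] bv\<epsilon> p\<epsilon> wv\<alpha> by simp
          have w0: "W \<epsilon> = PP c (wv T \<epsilon>) / PP c E" unfolding Wform using Pn whn blS[OF \<epsilon>S] whS[OF \<epsilon>S] bv\<epsilon> by simp
          have w1: "W (P \<epsilon>) = PP g E / PP g A" unfolding Wform using Pn whn bln whS[OF \<alpha>S] wv\<alpha> by simp
          show ?thesis unfolding o1 w0 w1 using I1 cE0 gA0 cA0 by (simp add: field_simps)
        qed
        show ?thesis unfolding 3 by (rule blk2) (use Pn NS om p\<epsilon> in auto)
      next
        case 4
        have om: "omB T \<zeta> = W \<zeta> * W (P \<zeta>)"
        proof -
          have o1: "omB T \<zeta> = PP d (wv T \<zeta>) / PP d B" using omBT[OF \<zeta>S] bv\<zeta> p\<zeta> wv\<beta> by simp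
          have w0: "W \<zeta> = PP d (wv T \<zeta>) / PP d F" unfolding Wform using Pn whn blS[OF \<zeta>S] whS[OF \<zeta>S] bv\<zeta> by simp
          have w1: "W (P \<zeta>) = PP h F / PP h B" unfolding Wform using Pn whn bln whS[OF \<beta>S] wv\<beta> by simp
          show ?thesis unfolding o1 w0 w1 using I2 dF0 hB0 dB0 by (simp add: field_simps)
        qed
        show ?thesis unfolding 4 by (rule blk2) (use Pn NS om p\<zeta> in auto)
      next
        case 5
        then have Pf: "P f = p f" using Pother[OF fS] by blast
        have "omB T f = W f" unfolding Wform using omBT[OF fS] Pf blS[OF fS] whS[OF fS] whS[OF pfS] by simp
        then show ?thesis using Pf by (intro blk1[where q=p and p=P]) simp_all
      qed
    qed
    then show "p f \<in> S \<and> (\<exists>k>0. p f = (P ^^ k) f \<and>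
      (\<forall>j. 0 < j \<longrightarrow> j < k \<longrightarrow> (P ^^ j) f \<notin> S) \<and> omB T f = (\<Prod>j<k. W ((P ^^ j) f)))"
      using pfS by blast
  qed
  have ebS': "eb \<notin> S'" and edS': "ed \<notin> S'" using S'eq nn_eb nn_ed by auto
  have gen1: "\<And>f. f \<in> S' \<Longrightarrow> P f \<in> S' \<Longrightarrow> p' f = P f \<Longrightarrow> p' f \<in> S' \<and> (\<exists>k>0. p' f = (P ^^ k) f \<and>
      (\<forall>j. 0 < j \<longrightarrow> j < k \<longrightarrow> (P ^^ j) f \<notin> S') \<and> omB T' f = (\<Prod>j<k. W ((P ^^ j) f)))"
  proof -
    fix f assume f: "f \<in> S'" "P f \<in> S'" "p' f = P f"
    have "omB T' f = W f" using omBT'[OF f(1)] f Wform by simp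
    then show "p' f \<in> S' \<and> (\<exists>k>0. p' f = (P ^^ k) f \<and>
      (\<forall>j. 0 < j \<longrightarrow> j < k \<longrightarrow> (P ^^ j) f \<notin> S') \<and> omB T' f = (\<Prod>j<k. W ((P ^^ j) f)))"
      using f by (intro conjI blk1[where q=p' and p=P]) simp_all
  qed
  have gen2b: "\<And>f. f \<in> S' \<Longrightarrow> P f = eb \<Longrightarrow> p' f = kB \<Longrightarrow> p' f \<in> S' \<and> (\<exists>k>0. p' f = (P ^^ k) f \<and>
      (\<forall>j. 0 < j \<longrightarrow> j < k \<longrightarrow> (P ^^ j) f \<notin> S') \<and> omB T' f = (\<Prod>j<k. W ((P ^^ j) f)))"
  proof -
    fix f assume f: "f \<in> S'" "P f = eb" "p' f = kB"
    have "omB T' f = W f * W (P f)"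
      using omBT'[OF f(1)] f Wform Web newS' whn whS[OF ebS] wvB by simp
    then show "p' f \<in> S' \<and> (\<exists>k>0. p' f = (P ^^ k) f \<and>
      (\<forall>j. 0 < j \<longrightarrow> j < k \<longrightarrow> (P ^^ j) f \<notin> S') \<and> omB T' f = (\<Prod>j<k. W ((P ^^ j) f)))"
      using f ebS' Pn newS' by (intro conjI blk2[where q=p' and p=P]) simp_all
  qed
  have gen2d: "\<And>f. f \<in> S' \<Longrightarrow> P f = ed \<Longrightarrow> p' f = kA \<Longrightarrow> p' f \<in> S' \<and> (\<exists>k>0. p' f = (P ^^ k) f \<and>
      (\<forall>j. 0 < j \<longrightarrow> j < k \<longrightarrow> (P ^^ j) f \<notin> S') \<and> omB T' f = (\<Prod>j<k. W ((P ^^ j) f)))"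
  proof -
    fix f assume f: "f \<in> S'" "P f = ed" "p' f = kA"
    have "omB T' f = W f * W (P f)"
      using omBT'[OF f(1)] f Wform Wed newS' whn whS[OF edS] wvA by simp
    then show "p' f \<in> S' \<and> (\<exists>k>0. p' f = (P ^^ k) f \<and>
      (\<forall>j. 0 < j \<longrightarrow> j < k \<longrightarrow> (P ^^ j) f \<notin> S') \<and> omB T' f = (\<Prod>j<k. W ((P ^^ j) f)))"
      using f edS' Pn newS' by (intro conjI blk2[where q=p' and p=P]) simp_all
  qed
  have pebne: "p eb \<noteq> ea" "p eb \<noteq> ec" using pinj[OF ebS ecS] pinj[OF ebS eaS] pec pea old_ne by auto
  have pedne: "p ed \<noteq> ea" "p ed \<noteq> ec" using pinj[OF edS ecS] pinj[OF edS eaS] pec pea old_ne by auto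
  have blkT': "\<And>f. f \<in> S' \<Longrightarrow> p' f \<in> S' \<and> (\<exists>k>0. p' f = (P ^^ k) f \<and>
      (\<forall>j. 0 < j \<longrightarrow> j < k \<longrightarrow> (P ^^ j) f \<notin> S') \<and> omB T' f = (\<Prod>j<k. W ((P ^^ j) f)))"
  proof -
    fix f assume fS': "f \<in> S'"
    consider (old) "f \<in> S \<and> f \<noteq> ea \<and> f \<noteq> eb \<and> f \<noteq> ec \<and> f \<noteq> ed" | (kA) "f = kA" | (kc) "f = kc" | (kB) "f = kB"
      | (kd) "f = kd" | (q1) "f = q1" | (q2) "f = q2" | (q3) "f = q3" | (q4) "f = q4"
      using S'cases[OF fS'] by blast
    then show "p' f \<in> S' \<and> (\<exists>k>0. p' f = (P ^^ k) f \<and>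
      (\<forall>j. 0 < j \<longrightarrow> j < k \<longrightarrow> (P ^^ j) f \<notin> S') \<and> omB T' f = (\<Prod>j<k. W ((P ^^ j) f)))"
    proof cases
      case old
      then have fS: "f \<in> S" and fo: "f \<noteq> ea" "f \<noteq> eb" "f \<noteq> ec" "f \<noteq> ed" by auto
      consider "f = \<epsilon>" | "f = \<zeta>" | "f \<noteq> \<epsilon> \<and> f \<noteq> \<zeta>" by blast
      then show ?thesis
      proof cases
        case 1 show ?thesis by (rule gen1) (use fS' 1 Pn p'\<epsilon> newS' in simp_all)
      next
        case 2 show ?thesis by (rule gen1) (use fS' 2 Pn p'\<zeta> newS' in simp_all)
      next
        case 3
        then have Pf: "P f = p f" using Pother[OF fS] fo by blast
        have p'f: "p' f = (if p f = ed then kA else if p f = eb then kB else p f)"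
          using p'S0[OF fS fo] 3 by blast
        have pfS: "p f \<in> S" using pS[OF fS] .
        have pf1: "p f \<noteq> ea" using pinj[OF fS ecS] pec fo by auto
        have pf3: "p f \<noteq> ec" using pinj[OF fS eaS] pea fo by auto
        consider "p f = ed" | "p f = eb" | "p f \<noteq> ed \<and> p f \<noteq> eb" by blast
        then show ?thesis
        proof cases
          case 1 show ?thesis by (rule gen2d[OF fS']) (use Pf p'f 1 in simp_all)
        next
          case 2 show ?thesis by (rule gen2b[OF fS']) (use Pf p'f 2 old_ne in simp_all)
        next
          case 3
          have "p f \<in> S'" using inS'[OF pfS pf1] 3 pf3 by blast
          show ?thesis by (rule gen1[OF fS']) (use \<open>p f \<in> S'\<close> Pf p'f 3 in simp_all)
        qed
      qed
    next
      case kA show ?thesis by (rule gen1) (use fS' kA Pn p'kA newS' in simp_all)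
    next
      case kB show ?thesis by (rule gen1) (use fS' kB Pn p'kB newS' in simp_all)
    next
      case q1 show ?thesis by (rule gen1) (use fS' q1 Pn p'q1 \<alpha>S' in simp_all)
    next
      case q3 show ?thesis by (rule gen1) (use fS' q3 Pn p'q3 \<beta>S' in simp_all)
    next
      case q2 show ?thesis by (rule gen1) (use fS' q2 Pn p'q2 newS' in simp_all)
    next
      case q4 show ?thesis by (rule gen1) (use fS' q4 Pn p'q4 newS' in simp_all)
    next
      case kc
      consider "p eb = ed" | "p eb = eb" | "p eb \<noteq> ed \<and> p eb \<noteq> eb" by blast
      then show ?thesis
      proof cases
        case 1 show ?thesis by (rule gen2d[OF fS']) (use Pn p'kc kc 1 in simp_all)
      next
        case 2 show ?thesis by (rule gen2b[OF fS']) (use Pn p'kc kc 2 old_ne in simp_all)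
      next
        case 3
        have "p eb \<in> S'" using inS'[OF pS[OF ebS] pebne(1)] 3 pebne(2) by blast
        show ?thesis by (rule gen1[OF fS']) (use \<open>p eb \<in> S'\<close> Pn p'kc kc 3 in simp_all)
      qed
    next
      case kd
      consider "p ed = ed" | "p ed = eb" | "p ed \<noteq> ed \<and> p ed \<noteq> eb" by blast
      then show ?thesis
      proof cases
        case 1 show ?thesis by (rule gen2d[OF fS']) (use Pn p'kd kd 1 in simp_all)
      next
        case 2 show ?thesis by (rule gen2b[OF fS']) (use Pn p'kd kd 2 old_ne in simp_all)
      next
        case 3
        have "p ed \<in> S'" using inS'[OF pS[OF edS] pedne(1)] 3 pedne(2) by blast
        show ?thesis by (rule gen1[OF fS']) (use \<open>p ed \<in> S'\<close> Pn p'kd kd 3 in simp_all)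
      qed
    qed
  qed
  have bT: "\<And>e. e \<in> S \<Longrightarrow> (\<exists>n>0. (P ^^ n) e = e) \<and> oprod p (omB T) e = oprod P W e"
    by (rule block_prod[OF _ blkT]) (use facerot_period[OF tT] p_def S_def in auto)
  have bT': "\<And>e. e \<in> S' \<Longrightarrow> (\<exists>n>0. (P ^^ n) e = e) \<and> oprod p' (omB T') e = oprod P W e"
    by (rule block_prod[OF _ blkT']) (use facerot_period[OF tT'] p'_def S'_def in auto)
  have oneT: "\<And>e. e \<in> S \<Longrightarrow> oprod P W e = 1"
  proof -
    fix e assume e: "e \<in> S"
    have "face_multiratio T e = 1" using cT e S_def unfolding coherent_def by blast
    then show "oprod P W e = 1" using bT[OF e] unfolding mult_B p_def by simp
  qed
  show ?thesis unfolding coherent_def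
  proof
    fix e assume e0: "e \<in> edges T'"
    have e: "e \<in> S'" using e0 S'_def by simp
    have "oprod p' (omB T') e = 1"
    proof (cases "e = q2 \<or> e = q4")
      case True
      have q24: "q2 \<noteq> q4" "q4 \<noteq> q2" using NEWNE by auto
      have o2: "omB T' q2 = PP h E / PP h F" using omBT'[OF newS'(6)] p'q2 newS' bln whn by simp
      have o4: "omB T' q4 = PP g F / PP g E" using omBT'[OF newS'(8)] p'q4 newS' bln whn by simp
      have prod1: "omB T' q2 * omB T' q4 = 1" unfolding o2 o4 using I5 hF0 gE0 by (simp add: field_simps)
      show ?thesis
      proof (cases "e = q2")
        case True
        then show ?thesis using oprod_2cycle[OF p'q2 p'q4 q24(1)] prod1 by simp
      next
        case False
        then have "e = q4" using \<open>e = q2 \<or> e = q4\<close> by simp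
        then show ?thesis using oprod_2cycle[OF p'q4 p'q2 q24(2)] prod1 by (simp add: mult.commute)
      qed
    next
      case False
      have "\<exists>k. (P ^^ k) e \<in> S"
      proof -
        consider (old) "e \<in> S \<and> e \<noteq> ea \<and> e \<noteq> eb \<and> e \<noteq> ec \<and> e \<noteq> ed" | "e = kA" | "e = kc" | "e = kB"
          | "e = kd" | "e = q1" | "e = q2" | "e = q3" | "e = q4"
          using S'cases[OF e] by blast
        then show ?thesis
        proof cases
          case old then show ?thesis by (intro exI[of _ 0]) simp
        next
          case 2 then show ?thesis using Pn pS[OF edS] by (intro exI[of _ 2]) (simp add: numeral_2_eq_2)
        next
          case 3 then show ?thesis using Pn pS[OF ebS] by (intro exI[of _ 1]) simp
        next
          case 4 then show ?thesis using Pn pS[OF ebS] by (intro exI[of _ 2]) (simp add: numeral_2_eq_2)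
        next
          case 5 then show ?thesis using Pn pS[OF edS] by (intro exI[of _ 1]) simp
        next
          case 6 then show ?thesis using Pn \<alpha>S by (intro exI[of _ 1]) simp
        next
          case 7 then show ?thesis using False by simp
        next
          case 8 then show ?thesis using Pn \<beta>S by (intro exI[of _ 1]) simp
        next
          case 9 then show ?thesis using False by simp
        qed
      qed
      then obtain k where k: "(P ^^ k) e \<in> S" by blast
      have "oprod p' (omB T') e = oprod P W e" using bT'[OF e] by simp
      also have "\<dots> = oprod P W ((P ^^ k) e)" using oprod_shift[of P e W k] bT'[OF e] by simp
      also have "\<dots> = 1" using oneT[OF k] .
      finally show ?thesis .
    qed
    then show "face_multiratio T' e = 1" unfolding mult_B p'_def .
  qed

qed

lemma M2_case:
  fixes T T' :: "('e, 'v, complex ^ 'n) tiling"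
  assumes ur: "urban_renewal T T'" and dT: "double_circuit T" and cT: "coherent T"
    and dT': "double_circuit T'" and nz': "nonzero_pairings T'"
  shows "coherent T'"
proof -
  from ur obtain ea kA kc kB kd q1 q2 q3 q4 g E h F where H: "let eb = rotB T ea; ec = rotW T eb; ed = rotB T ec;
         A = wv T ea; c = bv T ea; B = wv T ec; d = bv T ec;
         old = {ea, eb, ec, ed}; new = {kA, kc, kB, kd, q1, q2, q3, q4};
         wv' = (wv T)(kA := A, kc := E, kB := B, kd := F, q1 := E, q2 := E, q3 := F, q4 := F);
         bv' = (bv T)(kA := g, kc := c, kB := h, kd := d, q1 := g, q2 := h, q3 := h, q4 := g);
         rW = (merge2 (merge2 (rotW T) ed ea kA) eb ec kB)
                (kc := q1, q1 := q2, q2 := kc, q4 := kd, kd := q3, q3 := q4);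
         rB = (merge2 (merge2 (rotB T) ea eb kc) ec ed kd)
                (kA := q4, q4 := q1, q1 := kA, q2 := q3, q3 := kB, kB := q2)
     in ea \<in> edges T \<and> rotW T ed = ea \<and> A \<noteq> B \<and> c \<noteq> d \<and>
        card new = 8 \<and> new \<inter> edges T = {} \<and>
        distinct [g, E, h, F] \<and> {g, E, h, F} \<inter> verts T = {} \<and>
        edges T' = (edges T - old) \<union> new \<and>
        (\<forall>f\<in>edges T'. wv T' f = wv' f \<and> bv T' f = bv' f \<and>
                       rotW T' f = rW f \<and> rotB T' f = rB f) \<and>
        (\<forall>v\<in>verts T. lab T' v = lab T v) \<and>
        lab T' E \<noteq> 0 \<and>
        vec.span {lab T' E} = vec.span {lab T A, lab T B} \<inter> vec.span (lab T ` (nbrsB T c - {A, B})) \<and>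
        lab T' F \<noteq> 0 \<and>
        vec.span {lab T' F} = vec.span {lab T A, lab T B} \<inter> vec.span (lab T ` (nbrsB T d - {A, B})) \<and>
        lab T' g \<noteq> 0 \<and>
        hyp (lab T' g) = vec.span ((hyp (lab T c) \<inter> hyp (lab T d)) \<union>
                                    \<Inter> (hyp ` lab T ` (nbrsW T A - {c, d}))) \<and>
        lab T' h \<noteq> 0 \<and>
        hyp (lab T' h) = vec.span ((hyp (lab T c) \<inter> hyp (lab T d)) \<union>
                                    \<Inter> (hyp ` lab T ` (nbrsW T B - {c, d})))"
    unfolding urban_renewal_def by (elim exE) assumption
  show ?thesis
    by (rule M2_core[OF refl refl refl refl refl refl refl refl refl refl refl refl refl
          H[unfolded Let_def] dT cT dT' nz'])
qed


theorem mainTheorem1: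
  fixes T T' :: "('e, 'v, complex ^ 'n) tiling"
  assumes "CARD('n) \<ge> 3"
    and "double_circuit T"
    and "coherent T"
    and "move_M1 T T' \<or> urban_renewal T T'"
    and "double_circuit T'"
    and "nonzero_pairings T'"
  shows "coherent T'"
  using assms(4)
proof
  assume m: "move_M1 T T'"
  show ?thesis by (rule M1_case[OF assms(2,3) m assms(5,6)])
next
  assume u: "urban_renewal T T'"
  show ?thesis by (rule M2_case[OF u assms(2,3,5,6)])
qed

end
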